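(* Assume: (i) $Y := c_T(X_T)+\sum_{t=0}^{T-1}c_t(X_t,U_t)$, where $c_t:S\times A\to\mathbb{R}$ ($t=0,\dots,T-1$) and $c_T:S\to\mathbb{R}$ are bounded and upper semicontinuous; (ii) the transition kernel $Q$ is continuous in total variation, i.e., $(x_n,u_n)\to(x,u)$ implies $|Q(\cdot\mid x_n,u_n)-Q(\cdot\mid x,u)|(S)\to 0$. Let $\alpha\in(0,1]$. Define $J^\alpha_T:=c_T$ and, for $t=T-1,\dots,0$, $$\varphi^\alpha_t(x,u):=\sup_{\xi\in\mathcal{R}_\alpha(x,u)}\int_S J^\alpha_{t+1}\,\xi\,\mathrm{d}Q(\cdot\mid x,u),\quad v^\alpha_t:=c_t+\varphi^\alpha_t,\quad J^\alpha_t(x):=\inf_{u\in A}v^\alpha_t(x,u)\ \ (x\in S).$$ Then $J^\alpha_t$ is upper semicontinuous and bounded for all $t=0,1,\dots,T$. For every $\epsilon>0$ there is a deterministic Markov policy $\pi^*_\epsilon\in\Pi$ such that $\rho^{\pi^*_\epsilon}_{\alpha,x}(Y)\le J^\alpha_0(x)+\epsilon$ for all $x\in S$. In particular, $\inf_{\pi\in\Pi}\rho^\pi_{\alpha,x}(Y)\le J^\alpha_0(x)$ for all $x\in S$.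
   Context: Setting: $S$, $A$, $W$ are Borel spaces, $T\in\mathbb{N}$, $\Omega=(S\times A)^T\times S$ with Borel $\sigma$-algebra $\mathcal{B}(\Omega)$; $\omega=(x_0,u_0,\dots,x_{T-1},u_{T-1},x_T)$, $X_t(\omega)=x_t$, $U_t(\omega)=u_t$. $f:S\times A\times W\to S$ is Borel measurable, $P_D$ a distribution on $W$, and $Q(B\mid x,u)=P_D(\{d\in W: f(x,u,d)\in B\})$. $\Pi$ is the set of randomized history-dependent policies (Borel stochastic kernels $\pi_t$ on $A$ given $(S\times A)^t\times S$, $t=0,\dots,T-1$), which includes deterministic Markov policies; $P_x^\pi$ is the induced probability measure on $\Omega$ with $X_0=x$, $U_t\sim\pi_t(\cdot\mid\text{history})$, $X_{t+1}\sim Q(\cdot\mid X_t,U_t)$. For $(x,u)\in S\times A$, $\mathcal{R}_\alpha(x,u)$ is the set of Borel-measurable $\nu:S\to\mathbb{R}$ with $0\le\nu\le\alpha^{-1/T}$ $Q(\cdot\mid x,u)$-a.e. and $\int_S\nu\,\mathrm{d}Q(\cdot\mid x,u)=1$. $\mathcal{D}_\alpha$ is the set of tuples $(\xi_0,\dots,\xi_{T-1})$ where each $\xi_t(\cdot\mid\cdot,\cdot):S\times S\times A\to\mathbb{R}$ is Borel measurable and $\xi_t(\cdot\mid x,u)\in\mathcal{R}_\alpha(x,u)$ for every $(x,u)\in S\times A$. For $Y\in L^\infty(\Omega,\mathcal{B}(\Omega),P_x^\pi)$, $$\rho^\pi_{\alpha,x}(Y):=\sup_{(\xi_0,\dots,\xi_{T-1})\in\mathcal{D}_\alpha}\int_\Omega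 Y(\omega)\prod_{t=0}^{T-1}\xi_t(x_{t+1}\mid x_t,u_t)\,\mathrm{d}P_x^\pi(\omega).$$ *)

theory Defs
  imports "HOL-Probability.Probability"
begin

text \<open>Borel spaces are modelled as Borel subsets of Polish spaces (carrier sets of a
  polish_space type), carrying the subspace topology and the trace Borel sigma-algebra.\<close>

abbreviation MB :: "'x::topological_space set \<Rightarrow> 'x measure" where
  "MB X \<equiv> restrict_space borel X"

definition usc_on :: "'x::topological_space set \<Rightarrow> ('x \<Rightarrow> real) \<Rightarrow> bool" where
  "usc_on X g \<longleftrightarrow> (\<forall>x\<in>X. \<forall>s. (\<forall>n. s n \<in> X) \<longrightarrow> s \<longlonglongrightarrow> x \<longrightarrow>
      limsup (\<lambda>n. ereal (g (s n))) \<le> ereal (g x))"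

definition bounded_on :: "'x set \<Rightarrow> ('x \<Rightarrow> real) \<Rightarrow> bool" where
  "bounded_on X g \<longleftrightarrow> (\<exists>B. \<forall>x\<in>X. \<bar>g x\<bar> \<le> B)"

text \<open>Total variation |mu - nu|(space) of the signed measure mu - nu:
  supremum over finite measurable partitions.\<close>
definition tv_norm :: "'x measure \<Rightarrow> 'x measure \<Rightarrow> real" where
  "tv_norm \<mu> \<nu> = (SUP P \<in> {P. finite P \<and> disjoint P \<and> P \<subseteq> sets \<mu> \<and> \<Union>P = space \<mu>}.
      \<Sum>B\<in>P. \<bar>measure \<mu> B - measure \<nu> B\<bar>)"

text \<open>Transition kernel Q(. | x,u) = law of f(x,u,D), D ~ P_D.\<close>
definition Qk :: "'s::topological_space set \<Rightarrow> 'w measure \<Rightarrow> ('s \<Rightarrow> 'a \<Rightarrow> 'w \<Rightarrow> 's)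
    \<Rightarrow> 's \<Rightarrow> 'a \<Rightarrow> 's measure" where
  "Qk S PD f x u = distr PD (MB S) (\<lambda>d. f x u d)"

text \<open>Histories (x_0,u_0,...,u_{t-1},x_t), represented as a pair of extensional functions
  on {..t} and {..<t}; the sample space Omega is Hist S A T.\<close>
definition Hist :: "'s::topological_space set \<Rightarrow> 'a::topological_space set \<Rightarrow> nat
    \<Rightarrow> ((nat \<Rightarrow> 's) \<times> (nat \<Rightarrow> 'a)) measure" where
  "Hist S A t = (\<Pi>\<^sub>M i\<in>{..t}. MB S) \<Otimes>\<^sub>M (\<Pi>\<^sub>M i\<in>{..<t}. MB A)"

type_synonym ('s, 'a) policy = "nat \<Rightarrow> (nat \<Rightarrow> 's) \<times> (nat \<Rightarrow> 'a) \<Rightarrow> 'a measure"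

definition policies :: "'s::topological_space set \<Rightarrow> 'a::topological_space set \<Rightarrow> nat
    \<Rightarrow> ('s, 'a) policy set" where
  "policies S A T = {\<pi>. \<forall>t<T. \<pi> t \<in> Hist S A t \<rightarrow>\<^sub>M prob_algebra (MB A)}"

definition markov_policy :: "'a::topological_space set \<Rightarrow> (nat \<Rightarrow> 's \<Rightarrow> 'a) \<Rightarrow> ('s, 'a) policy" where
  "markov_policy A g = (\<lambda>t h. return (MB A) (g t (fst h t)))"

primrec path_meas :: "'s::topological_space set \<Rightarrow> 'a::topological_space set
    \<Rightarrow> ('s \<Rightarrow> 'a \<Rightarrow> 's measure) \<Rightarrow> ('s, 'a) policy \<Rightarrow> 's \<Rightarrow> nat
    \<Rightarrow> ((nat \<Rightarrow> 's) \<times> (nat \<Rightarrow> 'a)) measure" where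
  "path_meas S A Q \<pi> x 0 = return (Hist S A 0) ((\<lambda>i\<in>{..0::nat}. x), (\<lambda>i\<in>{..<0::nat}. undefined))"
| "path_meas S A Q \<pi> x (Suc t) =
     path_meas S A Q \<pi> x t \<bind> (\<lambda>h. \<pi> t h \<bind> (\<lambda>u. Q (fst h t) u \<bind>
       (\<lambda>y. return (Hist S A (Suc t)) ((fst h)(Suc t := y), (snd h)(t := u)))))"

definition R_alpha :: "'s::topological_space set \<Rightarrow> ('s \<Rightarrow> 'a \<Rightarrow> 's measure) \<Rightarrow> real \<Rightarrow> nat
    \<Rightarrow> 's \<Rightarrow> 'a \<Rightarrow> ('s \<Rightarrow> real) set" where
  "R_alpha S Q \<alpha> T x u = {\<nu>. \<nu> \<in> borel_measurable (MB S) \<and>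
      (AE y in Q x u. 0 \<le> \<nu> y \<and> \<nu> y \<le> \<alpha> powr (- 1 / real T)) \<and>
      integral\<^sup>L (Q x u) \<nu> = 1}"

text \<open>D_alpha: tuples (xi_0,...,xi_{T-1}); xi t y x u stands for xi_t(y | x,u).\<close>
definition D_alpha :: "'s::topological_space set \<Rightarrow> 'a::topological_space set
    \<Rightarrow> ('s \<Rightarrow> 'a \<Rightarrow> 's measure) \<Rightarrow> real \<Rightarrow> nat \<Rightarrow> (nat \<Rightarrow> 's \<Rightarrow> 's \<Rightarrow> 'a \<Rightarrow> real) set" where
  "D_alpha S A Q \<alpha> T = {\<xi>. \<forall>t<T.
      (\<lambda>(y, x, u). \<xi> t y x u) \<in> borel_measurable (MB S \<Otimes>\<^sub>M MB S \<Otimes>\<^sub>M MB A) \<and>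
      (\<forall>x\<in>S. \<forall>u\<in>A. (\<lambda>y. \<xi> t y x u) \<in> R_alpha S Q \<alpha> T x u)}"

definition rho :: "'s::topological_space set \<Rightarrow> 'a::topological_space set
    \<Rightarrow> ('s \<Rightarrow> 'a \<Rightarrow> 's measure) \<Rightarrow> real \<Rightarrow> nat \<Rightarrow> ('s, 'a) policy \<Rightarrow> 's
    \<Rightarrow> ((nat \<Rightarrow> 's) \<times> (nat \<Rightarrow> 'a) \<Rightarrow> real) \<Rightarrow> real" where
  "rho S A Q \<alpha> T \<pi> x Y = (SUP \<xi> \<in> D_alpha S A Q \<alpha> T.
      \<integral>\<omega>. Y \<omega> * (\<Prod>t<T. \<xi> t (fst \<omega> (Suc t)) (fst \<omega> t) (snd \<omega> t)) \<partial>path_meas S A Q \<pi> x T)"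

definition total_cost :: "nat \<Rightarrow> (nat \<Rightarrow> 's \<Rightarrow> 'a \<Rightarrow> real) \<Rightarrow> ('s \<Rightarrow> real)
    \<Rightarrow> (nat \<Rightarrow> 's) \<times> (nat \<Rightarrow> 'a) \<Rightarrow> real" where
  "total_cost T c cT \<omega> = cT (fst \<omega> T) + (\<Sum>t<T. c t (fst \<omega> t) (snd \<omega> t))"

definition phi :: "'s::topological_space set \<Rightarrow> ('s \<Rightarrow> 'a \<Rightarrow> 's measure) \<Rightarrow> real \<Rightarrow> nat
    \<Rightarrow> ('s \<Rightarrow> real) \<Rightarrow> 's \<Rightarrow> 'a \<Rightarrow> real" where
  "phi S Q \<alpha> T J x u = (SUP \<nu> \<in> R_alpha S Q \<alpha> T x u. \<integral>y. J y * \<nu> y \<partial>Q x u)"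

text \<open>Backward recursion: Jrec k = J_{T-k}.\<close>
fun Jrec :: "'s::topological_space set \<Rightarrow> 'a set \<Rightarrow> ('s \<Rightarrow> 'a \<Rightarrow> 's measure) \<Rightarrow> real \<Rightarrow> nat
    \<Rightarrow> (nat \<Rightarrow> 's \<Rightarrow> 'a \<Rightarrow> real) \<Rightarrow> ('s \<Rightarrow> real) \<Rightarrow> nat \<Rightarrow> 's \<Rightarrow> real" where
  "Jrec S A Q \<alpha> T c cT 0 = cT"
| "Jrec S A Q \<alpha> T c cT (Suc k) = (\<lambda>x. INF u \<in> A.
      c (T - Suc k) x u + phi S Q \<alpha> T (Jrec S A Q \<alpha> T c cT k) x u)"

definition J_alpha :: "'s::topological_space set \<Rightarrow> 'a set \<Rightarrow> ('s \<Rightarrow> 'a \<Rightarrow> 's measure) \<Rightarrow> real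
    \<Rightarrow> nat \<Rightarrow> (nat \<Rightarrow> 's \<Rightarrow> 'a \<Rightarrow> real) \<Rightarrow> ('s \<Rightarrow> real) \<Rightarrow> nat \<Rightarrow> 's \<Rightarrow> real" where
  "J_alpha S A Q \<alpha> T c cT t = Jrec S A Q \<alpha> T c cT (T - t)"

end

theory Submission
  imports Defs
begin

lemma usc_borel:
  fixes g :: "'x::metric_space \<Rightarrow> real"
  assumes "usc_on X g" shows "g \<in> borel_measurable (MB X)"
proof (rule borel_measurableI_ge)
  fix y
  let ?C = "{x\<in>X. y \<le> g x}"
  have eq: "?C = X \<inter> closure ?C"
  proof
    show "?C \<subseteq> X \<inter> closure ?C" using closure_subset[of ?C] by auto
    show "X \<inter> closure ?C \<subseteq> ?C"
    proof
      fix x assume x: "x \<in> X \<inter> closure ?C"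
      then obtain s where s: "\<forall>n. s n \<in> ?C" "s \<longlonglongrightarrow> x" using closure_sequential by blast
      have "ereal y \<le> limsup (\<lambda>n. ereal (g (s n)))"
        by (rule le_Limsup) (simp, rule always_eventually, use s in simp)
      also have "\<dots> \<le> ereal (g x)"
        using assms[unfolded usc_on_def, rule_format, of x s] x s by blast
      finally show "x \<in> ?C" using x by auto
    qed
  qed
  have cl: "closure ?C \<in> sets borel" by (rule borel_closed) simp
  have "{x \<in> space (MB X). y \<le> g x} = X \<inter> closure ?C"
    using eq by (simp add: space_restrict_space)
  also have "\<dots> \<in> sets (MB X)" unfolding sets_restrict_space using cl by (rule imageI)
  finally show "{x \<in> space (MB X). y \<le> g x} \<in> sets (MB X)" .
qed

lemma id_pair_MB: "(\<lambda>z. z) \<in> MB S \<Otimes>\<^sub>M MB A \<rightarrow>\<^sub>M MB (S \<times> (A::'a::second_countable_topology set))"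
  for S :: "'s::second_countable_topology set"
proof (rule measurable_restrict_space2)
  show "(\<lambda>z. z) \<in> space (MB S \<Otimes>\<^sub>M MB A) \<rightarrow> S \<times> A"
    by (auto simp: space_pair_measure space_restrict_space)
  have i1: "(\<lambda>x. x) \<in> MB S \<rightarrow>\<^sub>M (borel::'s measure)" by (rule measurable_restrict_space1) simp
  have i2: "(\<lambda>x. x) \<in> MB A \<rightarrow>\<^sub>M (borel::'a measure)" by (rule measurable_restrict_space1) simp
  have "(\<lambda>z. (fst z, snd z)) \<in> MB S \<Otimes>\<^sub>M MB A \<rightarrow>\<^sub>M borel \<Otimes>\<^sub>M borel"
    using measurable_Pair[OF measurable_compose[OF measurable_fst i1] measurable_compose[OF measurable_snd i2]] .
  then show "(\<lambda>z. z) \<in> MB S \<Otimes>\<^sub>M MB A \<rightarrow>\<^sub>M borel" by (simp add: borel_prod)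
qed

lemma usc_borel_pair:
  fixes v :: "'s::polish_space \<Rightarrow> 'a::polish_space \<Rightarrow> real"
  assumes "usc_on (S \<times> A) (\<lambda>(x, u). v x u)"
  shows "(\<lambda>(x, u). v x u) \<in> borel_measurable (MB S \<Otimes>\<^sub>M MB A)"
proof -
  have 1: "(\<lambda>(x, u). v x u) \<in> borel_measurable (MB (S \<times> A))" using usc_borel[OF assms] .
  have 2: "(\<lambda>z. z) \<in> MB S \<Otimes>\<^sub>M MB A \<rightarrow>\<^sub>M MB (S \<times> A)" by (rule id_pair_MB)
  show ?thesis using measurable_compose[OF 2 1] by simp
qed

lemma usc_slice:
  assumes "usc_on (S \<times> A) (\<lambda>(x, u). v x u)" "u \<in> A"
  shows "usc_on S (\<lambda>x. v x u)"
  unfolding usc_on_def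
proof (intro ballI allI impI)
  fix x s assume x: "x \<in> S" and s: "\<forall>n. s n \<in> S" "s \<longlonglongrightarrow> x"
  have "(\<lambda>n. (s n, u)) \<longlonglongrightarrow> (x, u)" using s by (intro tendsto_Pair) auto
  then show "limsup (\<lambda>n. ereal (v (s n) u)) \<le> ereal (v x u)"
  proof -
    have *: "\<And>n. (s n, u) \<in> S \<times> A" using s assms(2) by auto
    have xu: "(x, u) \<in> S \<times> A" using x assms(2) by auto
    have "limsup (\<lambda>n. ereal (case (s n, u) of (x, xa) \<Rightarrow> v x xa)) \<le> ereal (case (x, u) of (x, xa) \<Rightarrow> v x xa)"
      by (rule assms(1)[unfolded usc_on_def, rule_format, OF xu *]) fact
    then show ?thesis by simp
  qed
qed

lemma usc_add:
  assumes "usc_on X f" "usc_on X g" shows "usc_on X (\<lambda>x. f x + g x)"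
  unfolding usc_on_def
proof (intro ballI allI impI)
  fix x s assume x: "x \<in> X" and s: "\<forall>n. s n \<in> X" "s \<longlonglongrightarrow> x"
  have "limsup (\<lambda>n. ereal (f (s n) + g (s n))) = limsup (\<lambda>n. ereal (f (s n)) + ereal (g (s n)))" by simp
  also have "\<dots> \<le> limsup (\<lambda>n. ereal (f (s n))) + limsup (\<lambda>n. ereal (g (s n)))"
    by (rule ereal_limsup_add_mono)
  also have "\<dots> \<le> ereal (f x) + ereal (g x)"
    using assms x s unfolding usc_on_def by (intro add_mono) auto
  finally show "limsup (\<lambda>n. ereal (f (s n) + g (s n))) \<le> ereal (f x + g x)" by simp
qed

lemma usc_inf:
  assumes usc: "usc_on (S \<times> A) (\<lambda>(x, u). v x u)" and A: "A \<noteq> {}"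
    and lb: "\<And>x u. x \<in> S \<Longrightarrow> u \<in> A \<Longrightarrow> L \<le> v x u"
  shows "usc_on S (\<lambda>x. INF u\<in>A. v x u)"
  unfolding usc_on_def
proof (intro ballI allI impI)
  fix x s assume x: "x \<in> S" and s: "\<forall>n. s n \<in> S" "s \<longlonglongrightarrow> x"
  let ?l = "limsup (\<lambda>n. ereal (INF u\<in>A. v (s n) u))"
  have le: "?l \<le> ereal (v x u)" if u: "u \<in> A" for u
  proof -
    have "?l \<le> limsup (\<lambda>n. ereal (v (s n) u))"
    proof (rule Limsup_mono, rule always_eventually, rule allI)
      fix n
      have "bdd_below ((\<lambda>u. v (s n) u) ` A)" using s lb by (intro bdd_belowI2[where m=L]) auto
      then show "ereal (INF u\<in>A. v (s n) u) \<le> ereal (v (s n) u)"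
        by (simp add: cINF_lower u)
    qed
    also have "\<dots> \<le> ereal (v x u)" using usc_slice[OF usc u] x s unfolding usc_on_def by auto
    finally show ?thesis .
  qed
  show "?l \<le> ereal (INF u\<in>A. v x u)"
  proof (cases ?l)
    case (real r)
    have "r \<le> v x u" if "u \<in> A" for u using le[OF that] real by simp
    then have "r \<le> (INF u\<in>A. v x u)" using A by (intro cINF_greatest) auto
    then show ?thesis using real by simp
  next
    case PInf
    from A obtain u where "u \<in> A" by auto
    from le[OF this] PInf show ?thesis by simp
  next
    case MInf then show ?thesis by simp
  qed
qed


lemma sum_measure_disjoint_le1:
  assumes "prob_space \<mu>" "finite P" "disjoint P" "P \<subseteq> sets \<mu>"
  shows "(\<Sum>B\<in>P. measure \<mu> B) \<le> 1"
proof -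
  interpret prob_space \<mu> by fact
  have "(\<Sum>B\<in>P. measure \<mu> B) = measure \<mu> (\<Union>P)"
    by (rule measure_Union'[symmetric]) (use assms in \<open>auto simp: fmeasurable_eq_sets\<close>)
  also have "\<dots> \<le> 1" by (rule prob_le_1)
  finally show ?thesis .
qed

lemma tv_bdd:
  assumes "prob_space \<mu>" "prob_space \<mu>'" "sets \<mu>' = sets \<mu>"
  shows "bdd_above ((\<lambda>P. \<Sum>B\<in>P. \<bar>measure \<mu> B - measure \<mu>' B\<bar>) `
      {P. finite P \<and> disjoint P \<and> P \<subseteq> sets \<mu> \<and> \<Union>P = space \<mu>})"
proof (rule bdd_aboveI2)
  fix P assume "P \<in> {P. finite P \<and> disjoint P \<and> P \<subseteq> sets \<mu> \<and> \<Union>P = space \<mu>}"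
  then have P: "finite P" "disjoint P" "P \<subseteq> sets \<mu>" "P \<subseteq> sets \<mu>'" using assms(3) by auto
  have "(\<Sum>B\<in>P. \<bar>measure \<mu> B - measure \<mu>' B\<bar>) \<le> (\<Sum>B\<in>P. measure \<mu> B + measure \<mu>' B)"
    by (rule sum_mono) (smt (verit) measure_nonneg)
  also have "\<dots> = (\<Sum>B\<in>P. measure \<mu> B) + (\<Sum>B\<in>P. measure \<mu>' B)" by (rule sum.distrib)
  also have "\<dots> \<le> 1 + 1"
    by (intro add_mono sum_measure_disjoint_le1 assms P)
  finally show "(\<Sum>B\<in>P. \<bar>measure \<mu> B - measure \<mu>' B\<bar>) \<le> 2" by simp
qed

lemma tv_ge:
  assumes "prob_space \<mu>" "prob_space \<mu>'" "sets \<mu>' = sets \<mu>" "E \<in> sets \<mu>"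
  shows "\<bar>measure \<mu> E - measure \<mu>' E\<bar> \<le> tv_norm \<mu> \<mu>'"
  unfolding tv_norm_def
proof (rule cSUP_upper2[OF tv_bdd[OF assms(1-3)]])
  let ?P = "{E, space \<mu> - E}"
  have E: "E \<subseteq> space \<mu>" using assms(4) by (rule sets.sets_into_space)
  show "?P \<in> {P. finite P \<and> disjoint P \<and> P \<subseteq> sets \<mu> \<and> \<Union>P = space \<mu>}"
    using E assms(4) by (auto simp: pairwise_def disjnt_def)
  show "\<bar>measure \<mu> E - measure \<mu>' E\<bar> \<le> (\<Sum>B\<in>?P. \<bar>measure \<mu> B - measure \<mu>' B\<bar>)"
    by (rule member_le_sum[where f="\<lambda>B. \<bar>measure \<mu> B - measure \<mu>' B\<bar>"]) auto
qed

lemma le_of_all_over_n: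
  fixes a b c :: real
  assumes "\<And>n::nat. n \<ge> 1 \<Longrightarrow> a \<le> b + c / real n"
  shows "a \<le> b"
proof -
  have "(\<lambda>n. b + c / real n) \<longlonglongrightarrow> b + 0"
    by (intro tendsto_add tendsto_const lim_const_over_n)
  then have "(\<lambda>n. b + c / real n) \<longlonglongrightarrow> b" by simp
  then show ?thesis
    by (rule LIMSEQ_le_const) (intro exI[of _ 1] allI impI assms)
qed

lemma floor_count:
  fixes t :: real and n :: nat
  assumes "0 \<le> t" "t \<le> real n"
  shows "(\<Sum>j\<in>{1..n}. (if real j \<le> t then 1 else 0::real)) = real (nat \<lfloor>t\<rfloor>)"
proof -
  have "{j\<in>{1..n}. real j \<le> t} = {1..nat \<lfloor>t\<rfloor>}"
  proof (intro set_eqI iffI)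
    fix j assume "j \<in> {j\<in>{1..n}. real j \<le> t}"
    then have "int j \<le> \<lfloor>t\<rfloor>" "1 \<le> j" by (auto simp: le_floor_iff)
    then show "j \<in> {1..nat \<lfloor>t\<rfloor>}" by auto
  next
    fix j assume j: "j \<in> {1..nat \<lfloor>t\<rfloor>}"
    then have "int j \<le> \<lfloor>t\<rfloor>" by auto
    then have jt: "real j \<le> t" by (simp add: le_floor_iff)
    then have "real j \<le> real n" using assms by linarith
    then show "j \<in> {j\<in>{1..n}. real j \<le> t}" using j jt by auto
  qed
  moreover have "(\<Sum>j\<in>{1..n}. (if real j \<le> t then 1 else 0::real)) = real (card {j\<in>{1..n}. real j \<le> t})"
    by (simp add: sum.If_cases Int_def)
  ultimately show ?thesis by simp
qed


lemma tv_integral: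
  assumes mu: "prob_space \<mu>" and mu': "prob_space \<mu>'" and sets: "sets \<mu>' = sets \<mu>"
    and g: "g \<in> borel_measurable \<mu>" and gb: "\<And>y. y \<in> space \<mu> \<Longrightarrow> 0 \<le> g y \<and> g y \<le> M"
  shows "\<bar>(\<integral>y. g y \<partial>\<mu>) - (\<integral>y. g y \<partial>\<mu>')\<bar> \<le> M * tv_norm \<mu> \<mu>'"
proof -
  interpret P: prob_space \<mu> by fact
  have sp: "space \<mu>' = space \<mu>" using sets by (rule sets_eq_imp_space_eq)
  obtain y0 where "y0 \<in> space \<mu>" using P.not_empty by auto
  then have M0: "0 \<le> M" using gb by force
  show ?thesis
  proof (rule le_of_all_over_n[where c="2*M"])
    fix n :: nat assume n: "1 \<le> n"
    define E where "E j = {y \<in> space \<mu>. real j * M / real n \<le> g y}" for j :: nat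
    have E: "E j \<in> sets \<mu>" for j unfolding E_def using g by measurable
    define h where "h y = M / real n * (\<Sum>j\<in>{1..n}. indicator (E j) y)" for y
    have hg: "h y \<le> g y \<and> g y \<le> h y + M / real n" if y: "y \<in> space \<mu>" for y
    proof (cases "M = 0")
      case True
      then have "g y = 0" using gb[OF y] by auto
      then show ?thesis using True by (simp add: h_def)
    next
      case False
      then have Mp: "M > 0" using M0 by auto
      have np: "real n > 0" using n by simp
      define t where "t = g y * real n / M"
      have t: "0 \<le> t" "t \<le> real n" using gb[OF y] Mp np
        by (auto simp: t_def divide_le_eq mult_left_mono)
      have "(\<Sum>j\<in>{1..n}. indicator (E j) y) = (\<Sum>j\<in>{1..n}. if real j \<le> t then 1 else 0::real)"
      proof (rule sum.cong[OF refl])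
        fix j
        have "(real j * M / real n \<le> g y) = (real j \<le> t)"
          using Mp np by (simp add: t_def pos_divide_le_eq le_divide_eq mult.commute mult.left_commute)
        then show "indicator (E j) y = (if real j \<le> t then 1 else 0::real)"
          using y by (simp add: E_def indicator_def)
      qed
      also have "\<dots> = real (nat \<lfloor>t\<rfloor>)" by (rule floor_count[OF t])
      also have "\<dots> = of_int \<lfloor>t\<rfloor>" using t by simp
      finally have hy: "h y = M / real n * of_int \<lfloor>t\<rfloor>" by (simp add: h_def)
      have gy: "g y = M / real n * t" using Mp np by (simp add: t_def)
      have f1: "of_int \<lfloor>t\<rfloor> \<le> t" by (rule of_int_floor_le)
      have f2: "t \<le> of_int \<lfloor>t\<rfloor> + 1" by linarith
      have mn: "0 \<le> M / real n" using Mp np by simp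
      have "h y \<le> g y" unfolding hy gy using mult_left_mono[OF f1 mn] .
      moreover have "g y \<le> h y + M / real n"
        unfolding hy gy using mult_left_mono[OF f2 mn] by (simp add: distrib_left)
      ultimately show ?thesis by simp
    qed
    have h0: "0 \<le> h y" for y unfolding h_def using M0
      by (intro mult_nonneg_nonneg divide_nonneg_nonneg sum_nonneg) auto
    have key: "(\<integral>y. h y \<partial>\<nu>) = M / real n * (\<Sum>j\<in>{1..n}. measure \<nu> (E j))
        \<and> \<bar>(\<integral>y. g y \<partial>\<nu>) - (\<integral>y. h y \<partial>\<nu>)\<bar> \<le> M / real n"
      if nu: "prob_space \<nu>" "sets \<nu> = sets \<mu>" for \<nu>
    proof -
      interpret N: prob_space \<nu> by fact
      have spn: "space \<nu> = space \<mu>" using nu(2) by (rule sets_eq_imp_space_eq)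
      have En: "E j \<in> sets \<nu>" for j using E nu(2) by simp
      have gn: "g \<in> borel_measurable \<nu>" using g by (simp add: measurable_cong_sets[OF nu(2) refl])
      have hn: "h \<in> borel_measurable \<nu>" unfolding h_def using En by measurable
      have ig: "integrable \<nu> g"
        by (rule N.integrable_const_bound[where B=M]) (use gb spn gn in \<open>auto intro!: AE_I2\<close>)
      have "AE y in \<nu>. norm (h y) \<le> M"
      proof (rule AE_I2)
        fix y assume "y \<in> space \<nu>"
        then have y: "y \<in> space \<mu>" using spn by simp
        from hg[OF y] gb[OF y] h0[of y] show "norm (h y) \<le> M" by simp
      qed
      then have ih: "integrable \<nu> h" using hn by (rule N.integrable_const_bound)
      have ii: "integrable \<nu> (indicator (E j) :: _ \<Rightarrow> real)" for j
        by (rule N.integrable_const_bound[where B=1]) (use En in \<open>auto simp: indicator_def\<close>)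
      have "(\<integral>y. h y \<partial>\<nu>) = M / real n * (\<Sum>j\<in>{1..n}. (\<integral>y. indicator (E j) y \<partial>\<nu>))"
        unfolding h_def by (simp add: integral_sum ii)
      also have "\<dots> = M / real n * (\<Sum>j\<in>{1..n}. measure \<nu> (E j))"
        using sets.sets_into_space[OF En] by (simp add: Int_absorb2)
      finally have I1: "(\<integral>y. h y \<partial>\<nu>) = M / real n * (\<Sum>j\<in>{1..n}. measure \<nu> (E j))" .
      have "(\<integral>y. h y \<partial>\<nu>) \<le> (\<integral>y. g y \<partial>\<nu>)"
        by (rule integral_mono[OF ih ig]) (use hg spn in auto)
      moreover have "(\<integral>y. g y \<partial>\<nu>) \<le> (\<integral>y. h y + M / real n \<partial>\<nu>)"
        by (rule integral_mono[OF ig]) (use hg spn ih in auto)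
      moreover have "(\<integral>y. h y + M / real n \<partial>\<nu>) = (\<integral>y. h y \<partial>\<nu>) + M / real n"
        using ih by (simp add: N.prob_space)
      ultimately show ?thesis using I1 by linarith
    qed
    note k1 = key[OF mu refl] and k2 = key[OF mu' sets]
    have "\<bar>(\<integral>y. h y \<partial>\<mu>) - (\<integral>y. h y \<partial>\<mu>')\<bar>
        = M / real n * \<bar>\<Sum>j\<in>{1..n}. measure \<mu> (E j) - measure \<mu>' (E j)\<bar>"
    proof -
      have "(\<integral>y. h y \<partial>\<mu>) - (\<integral>y. h y \<partial>\<mu>') = M / real n * ((\<Sum>j\<in>{1..n}. measure \<mu> (E j)) - (\<Sum>j\<in>{1..n}. measure \<mu>' (E j)))"
        using k1 k2 by (simp only: right_diff_distrib)
      also have "\<dots> = M / real n * (\<Sum>j\<in>{1..n}. measure \<mu> (E j) - measure \<mu>' (E j))"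
        by (simp only: sum_subtractf)
      finally show ?thesis using M0 by (simp only: abs_mult) simp
    qed
    also have "\<dots> \<le> M / real n * (\<Sum>j\<in>{1..n}. tv_norm \<mu> \<mu>')"
      using M0 by (intro mult_left_mono order.trans[OF sum_abs] sum_mono tv_ge mu mu' sets E) auto
    also have "\<dots> = M * tv_norm \<mu> \<mu>'" using n by simp
    finally have "\<bar>(\<integral>y. h y \<partial>\<mu>) - (\<integral>y. h y \<partial>\<mu>')\<bar> \<le> M * tv_norm \<mu> \<mu>'" .
    then show "\<bar>(\<integral>y. g y \<partial>\<mu>) - (\<integral>y. g y \<partial>\<mu>')\<bar> \<le> M * tv_norm \<mu> \<mu>' + 2 * M / real n"
      using k1 k2 by linarith
  qed
qed


definition Rset :: "'s measure \<Rightarrow> 's::topological_space set \<Rightarrow> real \<Rightarrow> ('s \<Rightarrow> real) set" where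
  "Rset \<mu> S K = {\<nu>. \<nu> \<in> borel_measurable (MB S) \<and> (AE y in \<mu>. 0 \<le> \<nu> y \<and> \<nu> y \<le> K) \<and> integral\<^sup>L \<mu> \<nu> = 1}"

lemma R_alpha_eq: "R_alpha S Q \<alpha> T x u = Rset (Q x u) S (\<alpha> powr (- 1 / real T))"
  by (simp add: R_alpha_def Rset_def)

locale rsetting =
  fixes \<mu> :: "'s::topological_space measure" and S :: "'s set" and J :: "'s \<Rightarrow> real" and B K :: real
  assumes prob: "prob_space \<mu>" and sets_mu: "sets \<mu> = sets (MB S)"
    and J: "J \<in> borel_measurable (MB S)" and JB: "\<And>y. y \<in> S \<Longrightarrow> \<bar>J y\<bar> \<le> B"
    and K: "1 \<le> K"
begin

lemma sp: "space \<mu> = S"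
  using sets_eq_imp_space_eq[OF sets_mu] by (simp add: space_restrict_space)

lemma meas_eq: "borel_measurable (MB S) = borel_measurable \<mu>"
  by (rule measurable_cong_sets[OF sets_mu[symmetric] refl])

lemma Jm: "J \<in> borel_measurable \<mu>" using J unfolding meas_eq .

lemma B0: "0 \<le> B"
proof -
  interpret prob_space \<mu> by (rule prob)
  obtain y where "y \<in> space \<mu>" using not_empty by auto
  then show ?thesis using JB[of y] sp by auto
qed

lemma one_in: "(\<lambda>_. 1) \<in> Rset \<mu> S K"
proof -
  interpret prob_space \<mu> by (rule prob)
  show ?thesis using K by (auto simp: Rset_def prob_space)
qed

lemma R_props:
  assumes nu: "\<nu> \<in> Rset \<mu> S K"
  shows "integrable \<mu> \<nu>" "integrable \<mu> (\<lambda>y. J y * \<nu> y)"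
    "(\<integral>y. J y * \<nu> y \<partial>\<mu>) \<le> B" "- B \<le> (\<integral>y. J y * \<nu> y \<partial>\<mu>)"
    "(\<integral>y. J y * \<nu> y \<partial>\<mu>) \<le> s + K * (\<integral>y. max 0 (J y - s) \<partial>\<mu>)"
proof -
  interpret P: prob_space \<mu> by (rule prob)
  have nm: "\<nu> \<in> borel_measurable \<mu>" and ae: "AE y in \<mu>. 0 \<le> \<nu> y \<and> \<nu> y \<le> K"
    and int1: "(\<integral>y. \<nu> y \<partial>\<mu>) = 1"
    using nu meas_eq by (auto simp: Rset_def)
  have aeJ: "AE y in \<mu>. \<bar>J y\<bar> \<le> B" by (rule AE_I2) (use JB sp in auto)
  show iv: "integrable \<mu> \<nu>"
    by (rule P.integrable_const_bound[where B=K]) (use ae nm in auto)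
  have "AE y in \<mu>. norm (J y * \<nu> y) \<le> B * K"
    using ae aeJ
  proof eventually_elim
    case (elim y)
    then show ?case by (auto simp: abs_mult intro!: mult_mono)
  qed
  then show ivJ: "integrable \<mu> (\<lambda>y. J y * \<nu> y)"
    by (rule P.integrable_const_bound) (use nm Jm in measurable)
  have "(\<integral>y. J y * \<nu> y \<partial>\<mu>) \<le> (\<integral>y. B * \<nu> y \<partial>\<mu>)"
    by (rule integral_mono_AE[OF ivJ]) (use iv in simp, use ae aeJ in \<open>eventually_elim, auto intro: mult_right_mono\<close>)
  then show "(\<integral>y. J y * \<nu> y \<partial>\<mu>) \<le> B" using int1 by simp
  have "(\<integral>y. - B * \<nu> y \<partial>\<mu>) \<le> (\<integral>y. J y * \<nu> y \<partial>\<mu>)"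
  proof (rule integral_mono_AE[OF _ ivJ])
    show "integrable \<mu> (\<lambda>y. - B * \<nu> y)" using iv by simp
    show "AE y in \<mu>. - B * \<nu> y \<le> J y * \<nu> y" using ae aeJ
    proof eventually_elim
      case (elim y)
      then have "- B \<le> J y" by auto
      from mult_right_mono[OF this] elim show ?case by auto
    qed
  qed
  then show "- B \<le> (\<integral>y. J y * \<nu> y \<partial>\<mu>)" using int1 by simp
  have im: "integrable \<mu> (\<lambda>y. max 0 (J y - s))"
  proof (rule P.integrable_const_bound[where B="B + \<bar>s\<bar>"])
    show "AE y in \<mu>. norm (max 0 (J y - s)) \<le> B + \<bar>s\<bar>" using aeJ by eventually_elim auto
  qed (use Jm in measurable)
  have "(\<integral>y. J y * \<nu> y \<partial>\<mu>) \<le> (\<integral>y. s * \<nu> y + K * max 0 (J y - s) \<partial>\<mu>)"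
  proof (rule integral_mono_AE[OF ivJ])
    show "integrable \<mu> (\<lambda>y. s * \<nu> y + K * max 0 (J y - s))" using iv im by simp
    show "AE y in \<mu>. J y * \<nu> y \<le> s * \<nu> y + K * max 0 (J y - s)"
      using ae
    proof eventually_elim
      case (elim y)
      have "J y * \<nu> y = s * \<nu> y + (J y - s) * \<nu> y" by (simp add: algebra_simps)
      also have "(J y - s) * \<nu> y \<le> max 0 (J y - s) * \<nu> y" using elim by (intro mult_right_mono) auto
      also have "\<dots> \<le> max 0 (J y - s) * K" using elim by (intro mult_left_mono) auto
      finally show ?case by (simp add: mult.commute)
    qed
  qed
  also have "\<dots> = s + K * (\<integral>y. max 0 (J y - s) \<partial>\<mu>)" using iv im int1 by simp
  finally show "(\<integral>y. J y * \<nu> y \<partial>\<mu>) \<le> s + K * (\<integral>y. max 0 (J y - s) \<partial>\<mu>)" .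
qed


lemma quantile:
  obtains q \<nu> where "\<nu> \<in> Rset \<mu> S K" "- B - 1 \<le> q" "q \<le> B"
    "(\<integral>y. J y * \<nu> y \<partial>\<mu>) = q + K * (\<integral>y. max 0 (J y - q) \<partial>\<mu>)"
proof -
  interpret P: prob_space \<mu> by (rule prob)
  have Jm': "J \<in> borel_measurable \<mu>" by (rule Jm)
  define H where "H s = measure \<mu> {y\<in>space \<mu>. s \<le> J y}" for s
  define L where "L = - B - 1"
  define Z where "Z = {s. L \<le> s \<and> s \<le> B \<and> 1 / K \<le> H s}"
  define q where "q = Sup Z"
  have Kp: "0 < K" using K by simp
  have iK: "1 / K \<le> 1" "0 < 1 / K" using K by auto
  have Sm: "{y\<in>space \<mu>. s \<le> J y} \<in> sets \<mu>" for s using Jm' by measurable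
  have Hmono: "H t \<le> H s" if "s \<le> t" for s t
    unfolding H_def using that by (intro P.finite_measure_mono Sm) auto
  have HL: "H L = 1"
  proof -
    have "{y\<in>space \<mu>. L \<le> J y} = space \<mu>" using JB sp by (force simp: L_def abs_le_iff)
    then show ?thesis by (simp add: H_def P.prob_space)
  qed
  have LZ: "L \<in> Z" using HL iK B0 by (simp add: Z_def L_def)
  have bddZ: "bdd_above Z" by (rule bdd_aboveI[where M=B]) (simp add: Z_def)
  have qL: "L \<le> q" unfolding q_def by (rule cSup_upper[OF LZ bddZ])
  have qB: "q \<le> B" unfolding q_def using LZ by (intro cSup_least) (auto simp: Z_def)
  have a: "1 / K \<le> H s" if sq: "s < q" for s
  proof -
    obtain z where "z \<in> Z" "s < z" using less_cSupD[of Z s] LZ sq q_def by auto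
    then show ?thesis using Hmono[of s z] by (auto simp: Z_def)
  qed
  define A where "A n = {y\<in>space \<mu>. q - 1 / real (Suc n) \<le> J y}" for n
  have Aset: "range A \<subseteq> sets \<mu>" unfolding A_def using Jm' by auto
  have Adec: "decseq A"
    unfolding A_def by (rule decseq_SucI) (auto simp: frac_le intro: order.trans[rotated])
  have Aint: "(\<Inter>i. A i) = {y\<in>space \<mu>. q \<le> J y}"
  proof (intro set_eqI iffI)
    fix y assume y: "y \<in> (\<Inter>i. A i)"
    then have ys: "y \<in> space \<mu>" by (auto simp: A_def)
    show "y \<in> {y\<in>space \<mu>. q \<le> J y}"
    proof (rule ccontr)
      assume "y \<notin> {y\<in>space \<mu>. q \<le> J y}"
      then have "0 < q - J y" using ys by auto
      then obtain n where "inverse (real (Suc n)) < q - J y" using reals_Archimedean by blast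
      moreover have "y \<in> A n" using y by auto
      ultimately show False by (auto simp: A_def field_simps)
    qed
  next
    fix y assume "y \<in> {y\<in>space \<mu>. q \<le> J y}"
    then show "y \<in> (\<Inter>i. A i)" by (auto simp: A_def intro: order.trans[rotated])
  qed
  have b: "1 / K \<le> H q"
  proof -
    have "(\<lambda>n. measure \<mu> (A n)) \<longlonglongrightarrow> H q"
      using P.finite_Lim_measure_decseq[OF Aset Adec] Aint by (simp add: H_def)
    moreover have "1 / K \<le> measure \<mu> (A n)" for n
      using a[of "q - 1 / real (Suc n)"] by (simp add: H_def A_def)
    ultimately show ?thesis by (intro LIMSEQ_le_const) auto
  qed
  define C where "C n = {y\<in>space \<mu>. q + 1 / real (Suc n) \<le> J y}" for n
  have Cset: "range C \<subseteq> sets \<mu>" unfolding C_def using Jm' by auto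
  have Cinc: "incseq C"
    unfolding C_def by (rule incseq_SucI) (auto simp: frac_le intro: order.trans[rotated])
  have Cun: "(\<Union>i. C i) = {y\<in>space \<mu>. q < J y}"
  proof (intro set_eqI iffI)
    fix y assume "y \<in> (\<Union>i. C i)"
    then obtain n where "y \<in> C n" by auto
    then have y: "y \<in> space \<mu>" "q + 1 / real (Suc n) \<le> J y" by (auto simp: C_def)
    moreover have "0 < 1 / real (Suc n)" by simp
    ultimately have "q < J y" by linarith
    then show "y \<in> {y\<in>space \<mu>. q < J y}" using y by simp
  next
    fix y assume y: "y \<in> {y\<in>space \<mu>. q < J y}"
    then have "0 < J y - q" by auto
    then obtain n where "inverse (real (Suc n)) < J y - q" using reals_Archimedean by blast
    then have "y \<in> C n" using y by (auto simp: C_def field_simps)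
    then show "y \<in> (\<Union>i. C i)" by auto
  qed
  define E where "E = {y\<in>space \<mu>. q < J y}"
  define F where "F = {y\<in>space \<mu>. J y = q}"
  have Eset: "E \<in> sets \<mu>" unfolding E_def using Jm' by auto
  have Fset: "F \<in> sets \<mu>" unfolding F_def using Jm' by auto
  have c: "measure \<mu> E \<le> 1 / K"
  proof -
    have "(\<lambda>n. measure \<mu> (C n)) \<longlonglongrightarrow> measure \<mu> E"
      using P.finite_Lim_measure_incseq[OF Cset Cinc] Cun by (simp add: E_def)
    moreover have "measure \<mu> (C n) \<le> 1 / K" for n
    proof (cases "q + 1 / real (Suc n) \<le> B")
      case True
      have "q + 1 / real (Suc n) \<notin> Z"
      proof
        assume "q + 1 / real (Suc n) \<in> Z"
        then have "q + 1 / real (Suc n) \<le> q" unfolding q_def by (rule cSup_upper[OF _ bddZ])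
        then show False by simp
      qed
      moreover have "L \<le> q + 1 / real (Suc n)" using qL by (simp add: add_increasing2)
      ultimately have "H (q + 1 / real (Suc n)) < 1 / K" using True by (auto simp: Z_def)
      then show ?thesis by (simp add: H_def C_def)
    next
      case False
      then have "C n = {}" using JB sp by (force simp: C_def abs_le_iff)
      then show ?thesis using iK by simp
    qed
    ultimately show ?thesis by (intro LIMSEQ_le_const2) auto
  qed
  have EF: "E \<inter> F = {}" by (auto simp: E_def F_def)
  have HEF: "H q = measure \<mu> E + measure \<mu> F"
  proof -
    have "{y\<in>space \<mu>. q \<le> J y} = E \<union> F" by (auto simp: E_def F_def)
    then show ?thesis using P.finite_measure_Union[OF Eset Fset EF] by (simp add: H_def)
  qed
  define mE where "mE = measure \<mu> E"
  define mF where "mF = measure \<mu> F"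
  have mF0: "0 \<le> mF" "0 \<le> mE" by (simp_all add: mF_def mE_def)
  have KE: "K * mE \<le> 1" using c Kp by (simp add: mE_def field_simps)
  have KEF: "1 \<le> K * (mE + mF)" using b HEF Kp by (simp add: mE_def mF_def field_simps)
  define \<theta> where "\<theta> = (if mF = 0 then 0 else (1 - K * mE) / mF)"
  have th: "0 \<le> \<theta>" "\<theta> \<le> K"
  proof -
    show "0 \<le> \<theta>" using KE mF0 by (simp add: \<theta>_def)
    show "\<theta> \<le> K"
    proof (cases "mF = 0")
      case False
      then have "0 < mF" using mF0 by simp
      then show ?thesis using KEF by (simp add: \<theta>_def pos_divide_le_eq algebra_simps)
    qed (use K in \<open>simp add: \<theta>_def\<close>)
  qed
  have thmF: "\<theta> * mF = 1 - K * mE"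
  proof (cases "mF = 0")
    case True
    then show ?thesis using KE KEF by (simp add: \<theta>_def)
  qed (simp add: \<theta>_def)
  define \<nu> where "\<nu> y = K * indicator E y + \<theta> * indicator F y" for y
  have nm: "\<nu> \<in> borel_measurable \<mu>" unfolding \<nu>_def using Eset Fset by measurable
  have nb: "0 \<le> \<nu> y \<and> \<nu> y \<le> K" for y
    using th K EF by (auto simp: \<nu>_def indicator_def)
  have iE: "integrable \<mu> (indicator E :: _ \<Rightarrow> real)" "integrable \<mu> (indicator F :: _ \<Rightarrow> real)"
    using Eset Fset by (auto intro!: P.integrable_const_bound[where B=1] simp: indicator_def)
  have int1: "(\<integral>y. \<nu> y \<partial>\<mu>) = 1"
  proof -
    have "(\<integral>y. \<nu> y \<partial>\<mu>) = K * mE + \<theta> * mF"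
      using iE Eset Fset by (simp add: \<nu>_def mE_def mF_def Int_absorb2 sets.sets_into_space)
    then show ?thesis using thmF by simp
  qed
  have nuR: "\<nu> \<in> Rset \<mu> S K" using nm nb int1 meas_eq by (auto simp: Rset_def)
  have aeJ: "AE y in \<mu>. \<bar>J y\<bar> \<le> B" by (rule AE_I2) (use JB sp in auto)
  have iJE: "integrable \<mu> (\<lambda>y. J y * indicator E y)"
  proof (rule P.integrable_const_bound[where B=B])
    show "AE y in \<mu>. norm (J y * indicator E y) \<le> B" using aeJ
      by eventually_elim (use B0 in \<open>auto simp: indicator_def\<close>)
  qed (use Jm' Eset in measurable)
  have eq1: "(\<integral>y. J y * \<nu> y \<partial>\<mu>) = K * (\<integral>y. J y * indicator E y \<partial>\<mu>) + \<theta> * q * mF"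
  proof -
    have "(\<integral>y. J y * \<nu> y \<partial>\<mu>) = (\<integral>y. K * (J y * indicator E y) + \<theta> * q * indicator F y \<partial>\<mu>)"
      by (rule Bochner_Integration.integral_cong[OF refl]) (auto simp: \<nu>_def indicator_def F_def E_def)
    also have "\<dots> = K * (\<integral>y. J y * indicator E y \<partial>\<mu>) + \<theta> * q * mF"
      using iJE iE Fset by (simp add: mF_def Int_absorb2 sets.sets_into_space)
    finally show ?thesis .
  qed
  have eq2: "(\<integral>y. max 0 (J y - q) \<partial>\<mu>) = (\<integral>y. J y * indicator E y \<partial>\<mu>) - q * mE"
  proof -
    have "(\<integral>y. max 0 (J y - q) \<partial>\<mu>) = (\<integral>y. J y * indicator E y - q * indicator E y \<partial>\<mu>)"
      by (rule Bochner_Integration.integral_cong[OF refl]) (auto simp: indicator_def E_def)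
    also have "\<dots> = (\<integral>y. J y * indicator E y \<partial>\<mu>) - q * mE"
      using iJE iE Eset by (simp add: mE_def Int_absorb2 sets.sets_into_space)
    finally show ?thesis .
  qed
  have "(\<integral>y. J y * \<nu> y \<partial>\<mu>) = q + K * (\<integral>y. max 0 (J y - q) \<partial>\<mu>)"
  proof -
    have "\<theta> * mF * q = (1 - K * mE) * q" by (simp add: thmF)
    then show ?thesis unfolding eq1 eq2 by (simp add: algebra_simps)
  qed
  then show ?thesis using that[OF nuR] qL qB by (simp add: L_def)
qed

end

lemma limsup_le_of_tendsto:
  assumes "\<And>n. a n \<le> b n" "b \<longlonglongrightarrow> L"
  shows "limsup (\<lambda>n. ereal (a n)) \<le> ereal L"
proof -
  have "limsup (\<lambda>n. ereal (a n)) \<le> limsup (\<lambda>n. ereal (b n))"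
    by (rule Limsup_mono) (use assms(1) in simp)
  also have "\<dots> = ereal L"
    by (rule lim_imp_Limsup) (use assms(2) in \<open>simp_all add: tendsto_ereal\<close>)
  finally show ?thesis .
qed

locale mdp =
  fixes S :: "'s::polish_space set" and A :: "'a::polish_space set"
    and Q :: "'s \<Rightarrow> 'a \<Rightarrow> 's measure" and \<alpha> :: real and T :: nat
    and c :: "nat \<Rightarrow> 's \<Rightarrow> 'a \<Rightarrow> real" and cT :: "'s \<Rightarrow> real"
  assumes S_ne: "S \<noteq> {}" and A_ne: "A \<noteq> {}" and T1: "1 \<le> T"
    and Qprob: "\<And>x u. x \<in> S \<Longrightarrow> u \<in> A \<Longrightarrow> prob_space (Q x u)"
    and Qsets: "\<And>x u. x \<in> S \<Longrightarrow> u \<in> A \<Longrightarrow> sets (Q x u) = sets (MB S)"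
    and Qmeas: "(\<lambda>(x, u). Q x u) \<in> MB S \<Otimes>\<^sub>M MB A \<rightarrow>\<^sub>M prob_algebra (MB S)"
    and Qtv: "\<forall>x\<in>S. \<forall>u\<in>A. \<forall>xs us. (\<forall>n. xs n \<in> S \<and> us n \<in> A) \<longrightarrow>
                 (\<lambda>n. (xs n, us n)) \<longlonglongrightarrow> (x, u) \<longrightarrow>
                 (\<lambda>n. tv_norm (Q (xs n) (us n)) (Q x u)) \<longlonglongrightarrow> 0"
    and \<alpha>: "0 < \<alpha>" "\<alpha> \<le> 1"
    and c_usc: "\<forall>t<T. usc_on (S \<times> A) (\<lambda>(x, u). c t x u) \<and> bounded_on (S \<times> A) (\<lambda>(x, u). c t x u)"
    and cT_usc: "usc_on S cT" "bounded_on S cT"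
begin

definition "K = \<alpha> powr (- 1 / real T)"

lemma K1: "1 \<le> K"
proof -
  have "\<alpha> powr (1 / real T) \<le> 1" using \<alpha> by (intro powr_le1) auto
  moreover have "0 < \<alpha> powr (1 / real T)" using \<alpha> by simp
  moreover have "K = 1 / \<alpha> powr (1 / real T)"
    unfolding K_def using powr_minus_divide[of \<alpha> "1 / real T"] by simp
  ultimately show ?thesis by simp
qed

lemma R_eq: "R_alpha S Q \<alpha> T x u = Rset (Q x u) S K"
  by (simp add: R_alpha_eq K_def)

lemma rs: "x \<in> S \<Longrightarrow> u \<in> A \<Longrightarrow> J \<in> borel_measurable (MB S) \<Longrightarrow> (\<And>y. y \<in> S \<Longrightarrow> \<bar>J y\<bar> \<le> B)
    \<Longrightarrow> rsetting (Q x u) S J B K"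
  by (rule rsetting.intro) (erule Qprob, assumption, erule Qsets, assumption, assumption, assumption, rule K1)

lemma phi_facts:
  assumes x: "x \<in> S" and u: "u \<in> A" and J: "J \<in> borel_measurable (MB S)" and JB: "\<And>y. y \<in> S \<Longrightarrow> \<bar>J y\<bar> \<le> B"
  shows "\<bar>phi S Q \<alpha> T J x u\<bar> \<le> B"
    "\<And>\<nu>. \<nu> \<in> Rset (Q x u) S K \<Longrightarrow> (\<integral>y. J y * \<nu> y \<partial>Q x u) \<le> phi S Q \<alpha> T J x u"
    "\<And>s. phi S Q \<alpha> T J x u \<le> s + K * (\<integral>y. max 0 (J y - s) \<partial>Q x u)"
proof -
  interpret R: rsetting "Q x u" S J B K by (rule rs[OF x u J JB])
  have ne: "Rset (Q x u) S K \<noteq> {}" using R.one_in by auto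
  have bdd: "bdd_above ((\<lambda>\<nu>. \<integral>y. J y * \<nu> y \<partial>Q x u) ` Rset (Q x u) S K)"
    by (rule bdd_aboveI2[where M=B]) (rule R.R_props(3))
  have phi_eq: "phi S Q \<alpha> T J x u = (SUP \<nu>\<in>Rset (Q x u) S K. \<integral>y. J y * \<nu> y \<partial>Q x u)"
    by (simp add: phi_def R_eq)
  show up: "\<And>\<nu>. \<nu> \<in> Rset (Q x u) S K \<Longrightarrow> (\<integral>y. J y * \<nu> y \<partial>Q x u) \<le> phi S Q \<alpha> T J x u"
    unfolding phi_eq by (rule cSUP_upper[OF _ bdd])
  show "\<And>s. phi S Q \<alpha> T J x u \<le> s + K * (\<integral>y. max 0 (J y - s) \<partial>Q x u)"
    unfolding phi_eq by (rule cSUP_least[OF ne]) (rule R.R_props(5))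
  have "phi S Q \<alpha> T J x u \<le> B"
    unfolding phi_eq by (rule cSUP_least[OF ne]) (rule R.R_props(3))
  moreover have "- B \<le> phi S Q \<alpha> T J x u"
    using R.R_props(4)[OF R.one_in] up[OF R.one_in] by linarith
  ultimately show "\<bar>phi S Q \<alpha> T J x u\<bar> \<le> B" by simp
qed

lemma phi_usc:
  assumes J: "J \<in> borel_measurable (MB S)" and JB: "\<And>y. y \<in> S \<Longrightarrow> \<bar>J y\<bar> \<le> B"
  shows "usc_on (S \<times> A) (\<lambda>(x, u). phi S Q \<alpha> T J x u)"
  unfolding usc_on_def
proof (intro ballI allI impI)
  fix p w assume p: "p \<in> S \<times> A" and w: "\<forall>n. w n \<in> S \<times> A" "w \<longlonglongrightarrow> p"
  obtain x u where xu: "p = (x, u)" "x \<in> S" "u \<in> A" using p by auto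
  define xs where "xs n = fst (w n)" for n
  define us where "us n = snd (w n)" for n
  have w_eq: "w = (\<lambda>n. (xs n, us n))" by (simp add: xs_def us_def)
  have xsus: "\<forall>n. xs n \<in> S \<and> us n \<in> A" using w(1) by (auto simp: xs_def us_def mem_Times_iff)
  have tv: "(\<lambda>n. tv_norm (Q (xs n) (us n)) (Q x u)) \<longlonglongrightarrow> 0"
    using Qtv xu xsus w(2) w_eq by auto
  interpret R: rsetting "Q x u" S J B K by (rule rs[OF xu(2,3) J JB])
  obtain q \<nu> where q: "\<nu> \<in> Rset (Q x u) S K" "- B - 1 \<le> q" "q \<le> B"
    "(\<integral>y. J y * \<nu> y \<partial>Q x u) = q + K * (\<integral>y. max 0 (J y - q) \<partial>Q x u)"
    by (rule R.quantile)
  define g where "g y = max 0 (J y - q)" for y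
  define M where "M = 2 * B + 1"
  have gb: "0 \<le> g y \<and> g y \<le> M" if "y \<in> S" for y using JB[OF that] q(2) by (auto simp: g_def M_def)
  have conv: "(\<lambda>n. \<integral>y. g y \<partial>Q (xs n) (us n)) \<longlonglongrightarrow> (\<integral>y. g y \<partial>Q x u)"
  proof -
    have "(\<lambda>n. (\<integral>y. g y \<partial>Q (xs n) (us n)) - (\<integral>y. g y \<partial>Q x u)) \<longlonglongrightarrow> 0"
    proof (rule Lim_null_comparison)
      show "\<forall>\<^sub>F n in sequentially. norm ((\<integral>y. g y \<partial>Q (xs n) (us n)) - (\<integral>y. g y \<partial>Q x u))
          \<le> M * tv_norm (Q (xs n) (us n)) (Q x u)"
      proof (rule always_eventually, rule allI)
        fix n
        have xn: "xs n \<in> S" "us n \<in> A" using xsus by auto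
        have gm: "g \<in> borel_measurable (MB S)" unfolding g_def using J by measurable
        show "norm ((\<integral>y. g y \<partial>Q (xs n) (us n)) - (\<integral>y. g y \<partial>Q x u)) \<le> M * tv_norm (Q (xs n) (us n)) (Q x u)"
          unfolding real_norm_def
        proof (rule tv_integral)
          show "prob_space (Q (xs n) (us n))" "prob_space (Q x u)" using xn xu by (auto intro: Qprob)
          show "sets (Q x u) = sets (Q (xs n) (us n))" using xn xu by (simp add: Qsets)
          show "g \<in> borel_measurable (Q (xs n) (us n))"
            using gm by (simp add: measurable_cong_sets[OF Qsets[OF xn] refl])
          show "\<And>y. y \<in> space (Q (xs n) (us n)) \<Longrightarrow> 0 \<le> g y \<and> g y \<le> M"
            using gb sets_eq_imp_space_eq[OF Qsets[OF xn]] by (simp add: space_restrict_space)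
        qed
      qed
      show "(\<lambda>n. M * tv_norm (Q (xs n) (us n)) (Q x u)) \<longlonglongrightarrow> 0"
        using tendsto_mult_right_zero[OF tv] by simp
    qed
    then show ?thesis by (simp add: LIM_zero_iff)
  qed
  have le: "phi S Q \<alpha> T J (xs n) (us n) \<le> q + K * (\<integral>y. g y \<partial>Q (xs n) (us n))" for n
    unfolding g_def using xsus by (intro phi_facts(3)[OF _ _ J JB]) auto
  have lim: "(\<lambda>n. q + K * (\<integral>y. g y \<partial>Q (xs n) (us n))) \<longlonglongrightarrow> q + K * (\<integral>y. g y \<partial>Q x u)"
    by (intro tendsto_add tendsto_const tendsto_mult conv)
  have "limsup (\<lambda>n. ereal (phi S Q \<alpha> T J (xs n) (us n))) \<le> ereal (q + K * (\<integral>y. g y \<partial>Q x u))"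
    by (rule limsup_le_of_tendsto[OF le lim])
  also have "q + K * (\<integral>y. g y \<partial>Q x u) \<le> phi S Q \<alpha> T J x u"
    using q(4) phi_facts(2)[OF xu(2,3) J JB q(1)] by (simp add: g_def)
  finally show "limsup (\<lambda>n. ereal (case w n of (x, u) \<Rightarrow> phi S Q \<alpha> T J x u)) \<le> ereal (case p of (x, u) \<Rightarrow> phi S Q \<alpha> T J x u)"
    by (simp add: w_eq xu)
qed

end

lemma selector:
  fixes v :: "'s::polish_space \<Rightarrow> 'a::polish_space \<Rightarrow> real"
  assumes usc: "usc_on (S \<times> A) (\<lambda>(x, u). v x u)" and A: "A \<noteq> {}"
    and lb: "\<And>x u. x \<in> S \<Longrightarrow> u \<in> A \<Longrightarrow> L \<le> v x u" and e: "0 < e"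
  shows "\<exists>g. g \<in> MB S \<rightarrow>\<^sub>M MB A \<and> (\<forall>x\<in>S. v x (g x) \<le> (INF u\<in>A. v x u) + e)"
proof -
  obtain D where D: "countable D" "D \<subseteq> A" "A \<subseteq> closure D" by (rule separable)
  have Dne: "D \<noteq> {}" using D A closure_empty by auto
  define d where "d n = from_nat_into D n" for n
  have dD: "d n \<in> D" for n unfolding d_def by (rule from_nat_into[OF Dne])
  define J where "J x = (INF u\<in>A. v x u)" for x
  have ex: "\<exists>n. v x (d n) < J x + e" if x: "x \<in> S" for x
  proof -
    have bdd: "bdd_below ((\<lambda>u. v x u) ` A)" using lb x by (intro bdd_belowI2[where m=L]) auto
    have "\<exists>u\<in>A. v x u < J x + e / 2"
    proof (rule ccontr)
      assume "\<not> (\<exists>u\<in>A. v x u < J x + e / 2)"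
      then have "J x + e / 2 \<le> J x" unfolding J_def using A by (intro cINF_greatest) auto
      then show False using e by simp
    qed
    then obtain u where u: "u \<in> A" "v x u < J x + e / 2" by blast
    obtain s where s: "\<forall>n. s n \<in> D" "s \<longlonglongrightarrow> u" using D(3) u(1) closure_sequential by blast
    have "usc_on A (\<lambda>u. v x u)"
      unfolding usc_on_def
    proof (intro ballI allI impI)
      fix u' s' assume u': "u' \<in> A" "\<forall>n. s' n \<in> A" "s' \<longlonglongrightarrow> u'"
      have xu: "(x, u') \<in> S \<times> A" using x u' by auto
      have sA: "\<And>n. (x, s' n) \<in> S \<times> A" using x u' by auto
      have "(\<lambda>n. (x, s' n)) \<longlonglongrightarrow> (x, u')" using u' by (intro tendsto_Pair) auto
      have "limsup (\<lambda>n. ereal (case (x, s' n) of (x, xa) \<Rightarrow> v x xa)) \<le> ereal (case (x, u') of (x, xa) \<Rightarrow> v x xa)"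
        by (rule usc[unfolded usc_on_def, rule_format, OF xu sA]) fact
      then show "limsup (\<lambda>n. ereal (v x (s' n))) \<le> ereal (v x u')" by simp
    qed
    then have "limsup (\<lambda>n. ereal (v x (s n))) \<le> ereal (v x u)"
      unfolding usc_on_def using u(1) s D(2) by blast
    also have "\<dots> < ereal (v x u + e / 2)" using e by simp
    finally have "eventually (\<lambda>n. ereal (v x (s n)) < ereal (v x u + e / 2)) sequentially"
      by (rule Limsup_lessD)
    then obtain n where "v x (s n) < v x u + e / 2" by (auto dest: eventually_happens)
    moreover obtain m where "from_nat_into D m = s n" using from_nat_into_surj[OF D(1)] s(1) by blast
    ultimately show ?thesis using u(2) unfolding d_def by (intro exI[of _ m]) simp
  qed
  define N where "N x = (LEAST n. v x (d n) < J x + e)" for x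
  define g where "g x = d (N x)" for x
  have gprop: "v x (g x) \<le> J x + e" if "x \<in> S" for x
    using LeastI_ex[OF ex[OF that]] unfolding g_def N_def by simp
  have vm: "(\<lambda>x. v x (d n)) \<in> borel_measurable (MB S)" for n
    by (rule usc_borel, rule usc_slice[OF usc]) (use dD D(2) in auto)
  have Jm: "J \<in> borel_measurable (MB S)"
    unfolding J_def by (rule usc_borel, rule usc_inf[OF usc A lb])
  have Nm: "N \<in> MB S \<rightarrow>\<^sub>M count_space UNIV"
    unfolding N_def using vm Jm by measurable
  have dm: "d \<in> count_space UNIV \<rightarrow>\<^sub>M MB A"
    using dD D(2) by (auto simp: measurable_count_space_eq1 space_restrict_space)
  have "g \<in> MB S \<rightarrow>\<^sub>M MB A" unfolding g_def using measurable_compose[OF Nm dm] .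
  then show ?thesis using gprop unfolding J_def by blast
qed

context mdp begin

abbreviation "Jk k \<equiv> Jrec S A Q \<alpha> T c cT k"

lemma c_bnd: "t < T \<Longrightarrow> \<exists>B. \<forall>x\<in>S. \<forall>u\<in>A. \<bar>c t x u\<bar> \<le> B"
  using c_usc unfolding bounded_on_def by fastforce

lemma Jrec_props: "k \<le> T \<Longrightarrow> usc_on S (Jk k) \<and> (\<exists>B. \<forall>x\<in>S. \<bar>Jk k x\<bar> \<le> B)"
proof (induction k)
  case 0
  then show ?case using cT_usc by (auto simp: bounded_on_def)
next
  case (Suc k)
  then have IH: "usc_on S (Jk k)" "\<exists>B. \<forall>x\<in>S. \<bar>Jk k x\<bar> \<le> B" by auto
  obtain Bk where Bk: "\<And>x. x \<in> S \<Longrightarrow> \<bar>Jk k x\<bar> \<le> Bk" using IH(2) by blast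
  define t where "t = T - Suc k"
  have t: "t < T" using Suc.prems by (simp add: t_def)
  obtain Bc where Bc: "\<And>x u. x \<in> S \<Longrightarrow> u \<in> A \<Longrightarrow> \<bar>c t x u\<bar> \<le> Bc" using c_bnd[OF t] by blast
  have Jm: "Jk k \<in> borel_measurable (MB S)" by (rule usc_borel[OF IH(1)])
  have usc_v: "usc_on (S \<times> A) (\<lambda>(x, u). c t x u + phi S Q \<alpha> T (Jk k) x u)"
  proof -
    have "usc_on (S \<times> A) (\<lambda>p. (\<lambda>(x, u). c t x u) p + (\<lambda>(x, u). phi S Q \<alpha> T (Jk k) x u) p)"
      by (rule usc_add) (use c_usc t in simp, rule phi_usc[OF Jm Bk])
    then show ?thesis by (simp add: case_prod_beta')
  qed
  have vb: "\<bar>c t x u + phi S Q \<alpha> T (Jk k) x u\<bar> \<le> Bc + Bk" if "x \<in> S" "u \<in> A" for x u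
    using Bc[OF that] phi_facts(1)[OF that Jm Bk] by linarith
  have Jeq: "Jk (Suc k) = (\<lambda>x. INF u\<in>A. c t x u + phi S Q \<alpha> T (Jk k) x u)"
    by (simp add: t_def)
  have "usc_on S (Jk (Suc k))"
    unfolding Jeq by (rule usc_inf[OF usc_v A_ne, where L="- (Bc + Bk)"]) (use vb in force)
  moreover have "\<bar>Jk (Suc k) x\<bar> \<le> Bc + Bk" if x: "x \<in> S" for x
  proof -
    obtain u0 where u0: "u0 \<in> A" using A_ne by auto
    have bdd: "bdd_below ((\<lambda>u. c t x u + phi S Q \<alpha> T (Jk k) x u) ` A)"
      by (rule bdd_belowI2[where m="- (Bc + Bk)"]) (use vb x in force)
    have "(INF u\<in>A. c t x u + phi S Q \<alpha> T (Jk k) x u) \<le> c t x u0 + phi S Q \<alpha> T (Jk k) x u0"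
      by (rule cINF_lower[OF bdd u0])
    also have "\<dots> \<le> Bc + Bk" using vb[OF x u0] by simp
    finally have 1: "(INF u\<in>A. c t x u + phi S Q \<alpha> T (Jk k) x u) \<le> Bc + Bk" .
    have 2: "- (Bc + Bk) \<le> (INF u\<in>A. c t x u + phi S Q \<alpha> T (Jk k) x u)"
      by (rule cINF_greatest[OF A_ne]) (use vb x in force)
    show ?thesis unfolding Jeq using 1 2 by simp
  qed
  ultimately show ?case by blast
qed

end

lemma Hist_fst: "s \<le> t \<Longrightarrow> (\<lambda>h. fst h s) \<in> Hist S A t \<rightarrow>\<^sub>M MB S"
  unfolding Hist_def by (rule measurable_compose[OF measurable_fst measurable_component_singleton]) auto

lemma Hist_snd: "s < t \<Longrightarrow> (\<lambda>h. snd h s) \<in> Hist S A t \<rightarrow>\<^sub>M MB A"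
  unfolding Hist_def by (rule measurable_compose[OF measurable_snd measurable_component_singleton]) auto

lemma upd_meas:
  "(\<lambda>q. ((fst (fst (fst q)))(Suc t := snd q), (snd (fst (fst q)))(t := snd (fst q))))
     \<in> (Hist S A t \<Otimes>\<^sub>M MB A) \<Otimes>\<^sub>M MB S \<rightarrow>\<^sub>M Hist S A (Suc t)"
  unfolding Hist_def
proof (rule measurable_Pair)
  show "(\<lambda>q. (fst (fst (fst q)))(Suc t := snd q))
    \<in> (((\<Pi>\<^sub>M i\<in>{..t}. MB S) \<Otimes>\<^sub>M (\<Pi>\<^sub>M i\<in>{..<t}. MB A)) \<Otimes>\<^sub>M MB A) \<Otimes>\<^sub>M MB S \<rightarrow>\<^sub>M (\<Pi>\<^sub>M i\<in>{..Suc t}. MB S)"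
    by (rule measurable_fun_upd[where J="{..t}"]) (auto, measurable)
  show "(\<lambda>q. (snd (fst (fst q)))(t := snd (fst q)))
    \<in> (((\<Pi>\<^sub>M i\<in>{..t}. MB S) \<Otimes>\<^sub>M (\<Pi>\<^sub>M i\<in>{..<t}. MB A)) \<Otimes>\<^sub>M MB A) \<Otimes>\<^sub>M MB S \<rightarrow>\<^sub>M (\<Pi>\<^sub>M i\<in>{..<Suc t}. MB A)"
    by (rule measurable_fun_upd[where J="{..<t}"]) (auto, measurable)
qed


context mdp begin

definition stepk :: "('s, 'a) policy \<Rightarrow> nat \<Rightarrow> (nat \<Rightarrow> 's) \<times> (nat \<Rightarrow> 'a) \<Rightarrow> ((nat \<Rightarrow> 's) \<times> (nat \<Rightarrow> 'a)) measure" where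
  "stepk \<pi> t h = \<pi> t h \<bind> (\<lambda>u. Q (fst h t) u \<bind>
       (\<lambda>y. return (Hist S A (Suc t)) ((fst h)(Suc t := y), (snd h)(t := u))))"

lemma path_Suc: "path_meas S A Q \<pi> x (Suc t) = path_meas S A Q \<pi> x t \<bind> stepk \<pi> t"
  by (simp add: stepk_def[abs_def])

lemma Kn1: "(\<lambda>p. Q (fst (fst p) t) (snd p)) \<in> Hist S A t \<Otimes>\<^sub>M MB A \<rightarrow>\<^sub>M prob_algebra (MB S)"
proof -
  have "(\<lambda>p. (fst (fst p) t, snd p)) \<in> Hist S A t \<Otimes>\<^sub>M MB A \<rightarrow>\<^sub>M MB S \<Otimes>\<^sub>M MB A"
    by (intro measurable_Pair measurable_compose[OF measurable_fst Hist_fst] measurable_snd) simp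
  from measurable_compose[OF this Qmeas] show ?thesis by simp
qed

lemma Kn2: "(\<lambda>q. return (Hist S A (Suc t)) ((fst (fst (fst q)))(Suc t := snd q), (snd (fst (fst q)))(t := snd (fst q))))
   \<in> (Hist S A t \<Otimes>\<^sub>M MB A) \<Otimes>\<^sub>M MB S \<rightarrow>\<^sub>M prob_algebra (Hist S A (Suc t))"
  using measurable_compose[OF upd_meas measurable_return_prob_space] .

lemma Kn3: "(\<lambda>p. Q (fst (fst p) t) (snd p) \<bind> (\<lambda>y. return (Hist S A (Suc t)) ((fst (fst p))(Suc t := y), (snd (fst p))(t := snd p))))
   \<in> Hist S A t \<Otimes>\<^sub>M MB A \<rightarrow>\<^sub>M prob_algebra (Hist S A (Suc t))"
proof (rule measurable_bind_prob_space2[OF Kn1])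
  show "(\<lambda>(p, y). return (Hist S A (Suc t)) ((fst (fst p))(Suc t := y), (snd (fst p))(t := snd p)))
    \<in> (Hist S A t \<Otimes>\<^sub>M MB A) \<Otimes>\<^sub>M MB S \<rightarrow>\<^sub>M prob_algebra (Hist S A (Suc t))"
    using Kn2 by (simp add: case_prod_beta')
qed

lemma stepk_meas:
  assumes "\<pi> t \<in> Hist S A t \<rightarrow>\<^sub>M prob_algebra (MB A)"
  shows "stepk \<pi> t \<in> Hist S A t \<rightarrow>\<^sub>M prob_algebra (Hist S A (Suc t))"
proof -
  have "(\<lambda>h. \<pi> t h \<bind> (\<lambda>u. Q (fst h t) u \<bind>
       (\<lambda>y. return (Hist S A (Suc t)) ((fst h)(Suc t := y), (snd h)(t := u)))))
     \<in> Hist S A t \<rightarrow>\<^sub>M prob_algebra (Hist S A (Suc t))"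
  proof (rule measurable_bind_prob_space2[OF assms])
    show "(\<lambda>(h, u). Q (fst h t) u \<bind> (\<lambda>y. return (Hist S A (Suc t)) ((fst h)(Suc t := y), (snd h)(t := u))))
      \<in> Hist S A t \<Otimes>\<^sub>M MB A \<rightarrow>\<^sub>M prob_algebra (Hist S A (Suc t))"
      using Kn3 by (simp add: case_prod_beta')
  qed
  then show ?thesis by (simp add: stepk_def[abs_def])
qed

lemma path_prob:
  assumes pi: "\<pi> \<in> policies S A T" and x: "x \<in> S" and n: "n \<le> T"
  shows "path_meas S A Q \<pi> x n \<in> space (prob_algebra (Hist S A n))"
  using n
proof (induction n)
  case 0
  have "((\<lambda>i\<in>{..0::nat}. x), (\<lambda>i\<in>{..<0::nat}. undefined)) \<in> space (Hist S A 0)"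
    using x by (simp add: Hist_def space_pair_measure space_PiM space_restrict_space PiE_def extensional_def)
  then show ?case
    by (simp add: space_prob_algebra prob_space_return)
next
  case (Suc n)
  have st: "stepk \<pi> n \<in> Hist S A n \<rightarrow>\<^sub>M prob_algebra (Hist S A (Suc n))"
    by (rule stepk_meas) (use pi Suc.prems in \<open>auto simp: policies_def\<close>)
  have IH: "path_meas S A Q \<pi> x n \<in> space (prob_algebra (Hist S A n))" using Suc by simp
  show ?case unfolding path_Suc space_prob_algebra
    using prob_space_bind'[OF IH st] sets_bind'[OF IH st] by simp
qed


lemma hist_space:
  assumes "h \<in> space (Hist S A n)"
  shows "s \<le> n \<Longrightarrow> fst h s \<in> S" "s < n \<Longrightarrow> snd h s \<in> A"
  using measurable_space[OF Hist_fst assms] measurable_space[OF Hist_snd assms]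
  by (auto simp: space_restrict_space)

lemma upd_space:
  assumes "h \<in> space (Hist S A n)" "u \<in> A" "y \<in> S"
  shows "((fst h)(Suc n := y), (snd h)(n := u)) \<in> space (Hist S A (Suc n))"
  using measurable_space[OF upd_meas[where t=n and S=S and A=A], of "((h, u), y)"] assms
  by (simp add: space_pair_measure space_restrict_space)

lemma stepk_AE:
  assumes pi: "\<pi> n \<in> Hist S A n \<rightarrow>\<^sub>M prob_algebra (MB A)" and h: "h \<in> space (Hist S A n)"
    and P: "Measurable.pred (Hist S A (Suc n)) P"
    and ae: "\<And>u. u \<in> A \<Longrightarrow> AE y in Q (fst h n) u. P ((fst h)(Suc n := y), (snd h)(n := u))"
  shows "AE z in stepk \<pi> n h. P z"
proof -
  have pih: "\<pi> n h \<in> space (prob_algebra (MB A))" using measurable_space[OF pi h] .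
  then have sets_pih: "sets (\<pi> n h) = sets (MB A)" by (simp add: space_prob_algebra)
  have sp_pih: "space (\<pi> n h) = A"
    using sets_eq_imp_space_eq[OF sets_pih] by (simp add: space_restrict_space)
  have xn: "fst h n \<in> S" using hist_space(1)[OF h] by simp
  have hA: "h \<in> space (Hist S A n)" by (rule h)
  have N1: "(\<lambda>u. Q (fst h n) u \<bind> (\<lambda>y. return (Hist S A (Suc n)) ((fst h)(Suc n := y), (snd h)(n := u))))
      \<in> \<pi> n h \<rightarrow>\<^sub>M subprob_algebra (Hist S A (Suc n))"
  proof -
    have "(\<lambda>u. Q (fst h n) u \<bind> (\<lambda>y. return (Hist S A (Suc n)) ((fst h)(Suc n := y), (snd h)(n := u))))
      \<in> MB A \<rightarrow>\<^sub>M prob_algebra (Hist S A (Suc n))"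
      using measurable_Pair2[OF Kn3 h] by simp
    then show ?thesis
      by (simp add: measurable_cong_sets[OF sets_pih refl] measurable_prob_algebraD)
  qed
  have "AE u in \<pi> n h. AE z in Q (fst h n) u \<bind> (\<lambda>y. return (Hist S A (Suc n)) ((fst h)(Suc n := y), (snd h)(n := u))). P z"
  proof (rule AE_I2)
    fix u assume "u \<in> space (\<pi> n h)"
    then have u: "u \<in> A" using sp_pih by simp
    have sQ: "sets (Q (fst h n) u) = sets (MB S)" by (rule Qsets[OF xn u])
    have spQ: "space (Q (fst h n) u) = S"
      using sets_eq_imp_space_eq[OF sQ] by (simp add: space_restrict_space)
    have N2: "(\<lambda>y. return (Hist S A (Suc n)) ((fst h)(Suc n := y), (snd h)(n := u)))
        \<in> Q (fst h n) u \<rightarrow>\<^sub>M subprob_algebra (Hist S A (Suc n))"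
    proof -
      have hu: "(h, u) \<in> space (Hist S A n \<Otimes>\<^sub>M MB A)" using h u by (simp add: space_pair_measure space_restrict_space)
      have "(\<lambda>y. return (Hist S A (Suc n)) ((fst h)(Suc n := y), (snd h)(n := u)))
        \<in> MB S \<rightarrow>\<^sub>M prob_algebra (Hist S A (Suc n))"
        using measurable_Pair2[OF Kn2 hu] by simp
      then show ?thesis
        by (simp add: measurable_cong_sets[OF sQ refl] measurable_prob_algebraD)
    qed
    show "AE z in Q (fst h n) u \<bind> (\<lambda>y. return (Hist S A (Suc n)) ((fst h)(Suc n := y), (snd h)(n := u))). P z"
      unfolding AE_bind[OF N2 P]
    proof -
      show "AE y in Q (fst h n) u. AE z in return (Hist S A (Suc n)) ((fst h)(Suc n := y), (snd h)(n := u)). P z"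
        using ae[OF u]
      proof (rule AE_mp[OF _ AE_I2])
        fix y assume y: "y \<in> space (Q (fst h n) u)"
        then have "((fst h)(Suc n := y), (snd h)(n := u)) \<in> space (Hist S A (Suc n))"
          using upd_space[OF h u] spQ by simp
        then show "P ((fst h)(Suc n := y), (snd h)(n := u)) \<longrightarrow>
          (AE z in return (Hist S A (Suc n)) ((fst h)(Suc n := y), (snd h)(n := u)). P z)"
          by (simp add: AE_return[OF _ P])
      qed
    qed
  qed
  then show ?thesis unfolding stepk_def AE_bind[OF N1 P] .
qed


definition okp :: "(nat \<Rightarrow> 's \<Rightarrow> 's \<Rightarrow> 'a \<Rightarrow> real) \<Rightarrow> nat \<Rightarrow> (nat \<Rightarrow> 's) \<times> (nat \<Rightarrow> 'a) \<Rightarrow> bool" where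
  "okp \<xi> n h = (\<forall>s<n. 0 \<le> \<xi> s (fst h (Suc s)) (fst h s) (snd h s) \<and> \<xi> s (fst h (Suc s)) (fst h s) (snd h s) \<le> K)"

lemma xi_comp_meas:
  assumes xi: "\<xi> \<in> D_alpha S A Q \<alpha> T" and s: "s < T" "Suc s \<le> n"
  shows "(\<lambda>h. \<xi> s (fst h (Suc s)) (fst h s) (snd h s)) \<in> borel_measurable (Hist S A n)"
proof -
  have m: "(\<lambda>(y, x, u). \<xi> s y x u) \<in> borel_measurable (MB S \<Otimes>\<^sub>M MB S \<Otimes>\<^sub>M MB A)"
    using xi s by (simp add: D_alpha_def)
  have "(\<lambda>h. (fst h (Suc s), fst h s, snd h s)) \<in> Hist S A n \<rightarrow>\<^sub>M MB S \<Otimes>\<^sub>M MB S \<Otimes>\<^sub>M MB A"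
    using s by (intro measurable_Pair Hist_fst Hist_snd) auto
  from measurable_compose[OF this m] show ?thesis by simp
qed

lemma okp_pred:
  assumes xi: "\<xi> \<in> D_alpha S A Q \<alpha> T" and n: "n \<le> T"
  shows "Measurable.pred (Hist S A n) (okp \<xi> n)"
  unfolding okp_def
proof (intro pred_intros_countable(1) pred_intros_imp')
  fix s assume s: "s < n"
  have "(\<lambda>h. \<xi> s (fst h (Suc s)) (fst h s) (snd h s)) \<in> borel_measurable (Hist S A n)"
    using s n by (intro xi_comp_meas[OF xi]) auto
  then show "Measurable.pred (Hist S A n) (\<lambda>h. 0 \<le> \<xi> s (fst h (Suc s)) (fst h s) (snd h s) \<and> \<xi> s (fst h (Suc s)) (fst h s) (snd h s) \<le> K)"
    by measurable
qed

lemma path_sets: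
  assumes "\<pi> \<in> policies S A T" "x \<in> S" "n \<le> T"
  shows "sets (path_meas S A Q \<pi> x n) = sets (Hist S A n)" "prob_space (path_meas S A Q \<pi> x n)"
  using path_prob[OF assms] by (auto simp: space_prob_algebra)

lemma path_AE:
  assumes pi: "\<pi> \<in> policies S A T" and x: "x \<in> S" and xi: "\<xi> \<in> D_alpha S A Q \<alpha> T"
  shows "n \<le> T \<Longrightarrow> AE h in path_meas S A Q \<pi> x n. okp \<xi> n h"
proof (induction n)
  case 0
  show ?case by (rule AE_I2) (simp add: okp_def)
next
  case (Suc n)
  have n: "n \<le> T" "n < T" using Suc.prems by auto
  have pin: "\<pi> n \<in> Hist S A n \<rightarrow>\<^sub>M prob_algebra (MB A)" using pi n by (auto simp: policies_def)
  have sets_n: "sets (path_meas S A Q \<pi> x n) = sets (Hist S A n)" by (rule path_sets[OF pi x n(1)])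
  have st: "stepk \<pi> n \<in> path_meas S A Q \<pi> x n \<rightarrow>\<^sub>M subprob_algebra (Hist S A (Suc n))"
    using measurable_prob_algebraD[OF stepk_meas[where \<pi>=\<pi> and t=n, OF pin]]
    by (simp add: measurable_cong_sets[OF sets_n refl])
  have P: "Measurable.pred (Hist S A (Suc n)) (okp \<xi> (Suc n))" by (rule okp_pred[OF xi Suc.prems])
  have "AE h in path_meas S A Q \<pi> x n. AE z in stepk \<pi> n h. okp \<xi> (Suc n) z"
    using Suc.IH[OF n(1)] AE_space
  proof eventually_elim
    case (elim h)
    then have h: "h \<in> space (Hist S A n)" using sets_eq_imp_space_eq[OF sets_n] by simp
    show ?case
    proof (rule stepk_AE[where \<pi>=\<pi> and n=n, OF pin h P])
      fix u assume u: "u \<in> A"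
      have xn: "fst h n \<in> S" using hist_space(1)[OF h] by simp
      have "(\<lambda>y. \<xi> n y (fst h n) u) \<in> R_alpha S Q \<alpha> T (fst h n) u"
        using xi n xn u by (simp add: D_alpha_def)
      then have "AE y in Q (fst h n) u. 0 \<le> \<xi> n y (fst h n) u \<and> \<xi> n y (fst h n) u \<le> K"
        by (simp add: R_eq Rset_def)
      then show "AE y in Q (fst h n) u. okp \<xi> (Suc n) ((fst h)(Suc n := y), (snd h)(n := u))"
      proof eventually_elim
        case (elim y)
        show ?case unfolding okp_def
        proof (intro allI impI)
          fix s assume "s < Suc n"
          then consider "s < n" | "s = n" by linarith
          then show "0 \<le> \<xi> s (fst ((fst h)(Suc n := y), (snd h)(n := u)) (Suc s)) (fst ((fst h)(Suc n := y), (snd h)(n := u)) s) (snd ((fst h)(Suc n := y), (snd h)(n := u)) s) \<and>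
                \<xi> s (fst ((fst h)(Suc n := y), (snd h)(n := u)) (Suc s)) (fst ((fst h)(Suc n := y), (snd h)(n := u)) s) (snd ((fst h)(Suc n := y), (snd h)(n := u)) s) \<le> K"
          proof cases
            case 1
            then show ?thesis using \<open>okp \<xi> n h\<close> by (simp add: okp_def)
          next
            case 2
            then show ?thesis using elim by simp
          qed
        qed
      qed
    qed
  qed
  then show ?case unfolding path_Suc AE_bind[OF st P] .
qed

end

context mdp begin

lemma markov_in:
  assumes g: "\<forall>t<T. g t \<in> MB S \<rightarrow>\<^sub>M MB A"
  shows "markov_policy A g \<in> policies S A T"
  unfolding policies_def markov_policy_def
proof (intro CollectI allI impI)
  fix t assume t: "t < T"
  have "(\<lambda>h. g t (fst h t)) \<in> Hist S A t \<rightarrow>\<^sub>M MB A"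
    using measurable_compose[OF Hist_fst[of t t S A] g[rule_format, OF t]] by simp
  from measurable_compose[OF this measurable_return_prob_space]
  show "(\<lambda>h. return (MB A) (g t (fst h t))) \<in> Hist S A t \<rightarrow>\<^sub>M prob_algebra (MB A)" .
qed

lemma stepk_markov:
  assumes g: "\<forall>t<T. g t \<in> MB S \<rightarrow>\<^sub>M MB A" and t: "t < T" and h: "h \<in> space (Hist S A t)"
  shows "stepk (markov_policy A g) t h = Q (fst h t) (g t (fst h t)) \<bind>
     (\<lambda>y. return (Hist S A (Suc t)) ((fst h)(Suc t := y), (snd h)(t := g t (fst h t))))"
proof -
  have xt: "fst h t \<in> S" using hist_space(1)[OF h] by simp
  have u: "g t (fst h t) \<in> space (MB A)"
    using measurable_space[OF g[rule_format, OF t]] xt by (simp add: space_restrict_space)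
  have N: "(\<lambda>u. Q (fst h t) u \<bind> (\<lambda>y. return (Hist S A (Suc t)) ((fst h)(Suc t := y), (snd h)(t := u))))
      \<in> MB A \<rightarrow>\<^sub>M subprob_algebra (Hist S A (Suc t))"
    using measurable_prob_algebraD[OF measurable_Pair2[OF Kn3 h]] by simp
  show ?thesis unfolding stepk_def markov_policy_def using bind_return[OF N u] by simp
qed

lemma integral_stepk:
  fixes F :: "(nat \<Rightarrow> 's) \<times> (nat \<Rightarrow> 'a) \<Rightarrow> real"
  assumes g: "\<forall>t<T. g t \<in> MB S \<rightarrow>\<^sub>M MB A" and t: "t < T" and h: "h \<in> space (Hist S A t)"
    and F: "F \<in> borel_measurable (Hist S A (Suc t))" and Fb: "\<And>z. z \<in> space (Hist S A (Suc t)) \<Longrightarrow> \<bar>F z\<bar> \<le> Bf"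
  shows "(\<integral>z. F z \<partial>stepk (markov_policy A g) t h)
    = (\<integral>y. F ((fst h)(Suc t := y), (snd h)(t := g t (fst h t))) \<partial>Q (fst h t) (g t (fst h t)))"
proof -
  let ?u = "g t (fst h t)"
  have xt: "fst h t \<in> S" using hist_space(1)[OF h] by simp
  have u: "?u \<in> A"
    using measurable_space[OF g[rule_format, OF t]] xt by (simp add: space_restrict_space)
  have sQ: "sets (Q (fst h t) ?u) = sets (MB S)" by (rule Qsets[OF xt u])
  have spQ: "space (Q (fst h t) ?u) = S"
    using sets_eq_imp_space_eq[OF sQ] by (simp add: space_restrict_space)
  interpret PQ: prob_space "Q (fst h t) ?u" by (rule Qprob[OF xt u])
  have hu: "(h, ?u) \<in> space (Hist S A t \<Otimes>\<^sub>M MB A)" using h u by (simp add: space_pair_measure space_restrict_space)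
  have N2: "(\<lambda>y. return (Hist S A (Suc t)) ((fst h)(Suc t := y), (snd h)(t := ?u)))
      \<in> Q (fst h t) ?u \<rightarrow>\<^sub>M subprob_algebra (Hist S A (Suc t))"
    using measurable_prob_algebraD[OF measurable_Pair2[OF Kn2 hu]]
    by (simp add: measurable_cong_sets[OF sQ refl])
  have "(\<integral>z. F z \<partial>stepk (markov_policy A g) t h)
      = (\<integral>z. F z \<partial>(Q (fst h t) ?u \<bind> (\<lambda>y. return (Hist S A (Suc t)) ((fst h)(Suc t := y), (snd h)(t := ?u)))))"
    by (simp add: stepk_markov[OF g t h])
  also have "\<dots> = (\<integral>y. (\<integral>z. F z \<partial>return (Hist S A (Suc t)) ((fst h)(Suc t := y), (snd h)(t := ?u))) \<partial>Q (fst h t) ?u)"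
  proof (rule integral_bind[OF F Fb N2, where B'=1])
    show "finite_measure (Q (fst h t) ?u)" by (rule PQ.finite_measure_axioms)
    show "AE y in Q (fst h t) ?u. emeasure (return (Hist S A (Suc t)) ((fst h)(Suc t := y), (snd h)(t := ?u)))
        (space (return (Hist S A (Suc t)) ((fst h)(Suc t := y), (snd h)(t := ?u)))) \<le> ennreal 1"
    proof (rule AE_I2)
      fix y assume "y \<in> space (Q (fst h t) ?u)"
      then have "((fst h)(Suc t := y), (snd h)(t := ?u)) \<in> space (Hist S A (Suc t))"
        using upd_space[OF h u] spQ by simp
      then show "emeasure (return (Hist S A (Suc t)) ((fst h)(Suc t := y), (snd h)(t := ?u)))
        (space (return (Hist S A (Suc t)) ((fst h)(Suc t := y), (snd h)(t := ?u)))) \<le> ennreal 1"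
        by (simp add: prob_space.emeasure_space_1[OF prob_space_return])
    qed
  qed simp
  also have "\<dots> = (\<integral>y. F ((fst h)(Suc t := y), (snd h)(t := ?u)) \<partial>Q (fst h t) ?u)"
  proof (rule Bochner_Integration.integral_cong[OF refl])
    fix y assume "y \<in> space (Q (fst h t) ?u)"
    then have "((fst h)(Suc t := y), (snd h)(t := ?u)) \<in> space (Hist S A (Suc t))"
      using upd_space[OF h u] spQ by simp
    then show "(\<integral>z. F z \<partial>return (Hist S A (Suc t)) ((fst h)(Suc t := y), (snd h)(t := ?u))) = F ((fst h)(Suc t := y), (snd h)(t := ?u))"
      by (rule integral_return[OF _ F])
  qed
  finally show ?thesis .
qed

lemma integral_path_Suc:
  fixes F :: "(nat \<Rightarrow> 's) \<times> (nat \<Rightarrow> 'a) \<Rightarrow> real"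
  assumes g: "\<forall>t<T. g t \<in> MB S \<rightarrow>\<^sub>M MB A" and t: "t < T" and x: "x \<in> S"
    and F: "F \<in> borel_measurable (Hist S A (Suc t))" and Fb: "\<And>z. z \<in> space (Hist S A (Suc t)) \<Longrightarrow> \<bar>F z\<bar> \<le> Bf"
  shows "(\<integral>z. F z \<partial>path_meas S A Q (markov_policy A g) x (Suc t))
    = (\<integral>h. (\<integral>z. F z \<partial>stepk (markov_policy A g) t h) \<partial>path_meas S A Q (markov_policy A g) x t)"
    "(\<lambda>h. (\<integral>z. F z \<partial>stepk (markov_policy A g) t h)) \<in> borel_measurable (path_meas S A Q (markov_policy A g) x t)"
proof -
  let ?\<pi> = "markov_policy A g"
  have pi: "?\<pi> \<in> policies S A T" by (rule markov_in[OF g])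
  have pit: "?\<pi> t \<in> Hist S A t \<rightarrow>\<^sub>M prob_algebra (MB A)" using pi t by (auto simp: policies_def)
  have sets_t: "sets (path_meas S A Q ?\<pi> x t) = sets (Hist S A t)" using path_sets[OF pi x] t by simp
  interpret PP: prob_space "path_meas S A Q ?\<pi> x t" using path_sets[OF pi x] t by simp
  have st: "stepk ?\<pi> t \<in> path_meas S A Q ?\<pi> x t \<rightarrow>\<^sub>M subprob_algebra (Hist S A (Suc t))"
    using measurable_prob_algebraD[OF stepk_meas[where \<pi>="?\<pi>" and t=t, OF pit]]
    by (simp add: measurable_cong_sets[OF sets_t refl])
  show "(\<integral>z. F z \<partial>path_meas S A Q ?\<pi> x (Suc t))
    = (\<integral>h. (\<integral>z. F z \<partial>stepk ?\<pi> t h) \<partial>path_meas S A Q ?\<pi> x t)"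
    unfolding path_Suc
  proof (rule integral_bind[OF F Fb st, where B'=1])
    show "finite_measure (path_meas S A Q ?\<pi> x t)" by (rule PP.finite_measure_axioms)
    show "AE h in path_meas S A Q ?\<pi> x t. emeasure (stepk ?\<pi> t h) (space (stepk ?\<pi> t h)) \<le> ennreal 1"
    proof (rule AE_I2)
      fix h assume "h \<in> space (path_meas S A Q ?\<pi> x t)"
      then have "stepk ?\<pi> t h \<in> space (subprob_algebra (Hist S A (Suc t)))" by (rule measurable_space[OF st])
      then show "emeasure (stepk ?\<pi> t h) (space (stepk ?\<pi> t h)) \<le> ennreal 1"
        by (auto simp: space_subprob_algebra subprob_space.emeasure_space_le_1)
    qed
  qed
  show "(\<lambda>h. (\<integral>z. F z \<partial>stepk ?\<pi> t h)) \<in> borel_measurable (path_meas S A Q ?\<pi> x t)"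
    using measurable_compose[OF st integral_measurable_subprob_algebra[OF F]] by simp
qed

end

context mdp begin

definition xit :: "(nat \<Rightarrow> 's \<Rightarrow> 's \<Rightarrow> 'a \<Rightarrow> real) \<Rightarrow> nat \<Rightarrow> 's \<Rightarrow> 's \<Rightarrow> 'a \<Rightarrow> real" where
  "xit \<xi> s y x u = max 0 (min K (\<xi> s y x u))"

definition Pr :: "(nat \<Rightarrow> 's \<Rightarrow> 's \<Rightarrow> 'a \<Rightarrow> real) \<Rightarrow> nat \<Rightarrow> (nat \<Rightarrow> 's) \<times> (nat \<Rightarrow> 'a) \<Rightarrow> real" where
  "Pr \<xi> n h = (\<Prod>s<n. xit \<xi> s (fst h (Suc s)) (fst h s) (snd h s))"

definition Cs :: "nat \<Rightarrow> (nat \<Rightarrow> 's) \<times> (nat \<Rightarrow> 'a) \<Rightarrow> real" where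
  "Cs n h = (\<Sum>s<n. c s (fst h s) (snd h s))"

abbreviation "Jn n \<equiv> Jk (T - n)"

lemma c_unif: "\<exists>Bc. \<forall>t<T. \<forall>x\<in>S. \<forall>u\<in>A. \<bar>c t x u\<bar> \<le> Bc"
proof -
  have "\<forall>t. \<exists>B. t < T \<longrightarrow> (\<forall>x\<in>S. \<forall>u\<in>A. \<bar>c t x u\<bar> \<le> B)" using c_bnd by blast
  then obtain Bf where Bf: "\<And>t. t < T \<Longrightarrow> \<forall>x\<in>S. \<forall>u\<in>A. \<bar>c t x u\<bar> \<le> Bf t" by metis
  have "\<bar>c t x u\<bar> \<le> (\<Sum>t<T. \<bar>Bf t\<bar>)" if "t < T" "x \<in> S" "u \<in> A" for t x u
  proof -
    have "\<bar>c t x u\<bar> \<le> \<bar>Bf t\<bar>" using Bf[OF that(1)] that by force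
    also have "\<dots> \<le> (\<Sum>t<T. \<bar>Bf t\<bar>)" using that(1) by (intro member_le_sum) auto
    finally show ?thesis .
  qed
  then show ?thesis by blast
qed

lemma J_unif: "\<exists>BJ. \<forall>k\<le>T. \<forall>x\<in>S. \<bar>Jk k x\<bar> \<le> BJ"
proof -
  have "\<forall>k. \<exists>B. k \<le> T \<longrightarrow> (\<forall>x\<in>S. \<bar>Jk k x\<bar> \<le> B)" using Jrec_props by blast
  then obtain Bf where Bf: "\<And>k. k \<le> T \<Longrightarrow> \<forall>x\<in>S. \<bar>Jk k x\<bar> \<le> Bf k" by metis
  have "\<bar>Jk k x\<bar> \<le> (\<Sum>k\<le>T. \<bar>Bf k\<bar>)" if "k \<le> T" "x \<in> S" for k x
  proof -
    have "\<bar>Jk k x\<bar> \<le> \<bar>Bf k\<bar>" using Bf[OF that(1)] that by force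
    also have "\<dots> \<le> (\<Sum>k\<le>T. \<bar>Bf k\<bar>)" using that(1) by (intro member_le_sum) auto
    finally show ?thesis .
  qed
  then show ?thesis by blast
qed

lemma xit_bnd: "0 \<le> xit \<xi> s y x u \<and> xit \<xi> s y x u \<le> K"
  using K1 by (simp add: xit_def)

lemma Pr_bnd: "0 \<le> Pr \<xi> n h \<and> Pr \<xi> n h \<le> K ^ n"
proof
  show "0 \<le> Pr \<xi> n h" unfolding Pr_def by (intro prod_nonneg) (simp add: xit_bnd)
  show "Pr \<xi> n h \<le> K ^ n" unfolding Pr_def by (rule prod_le_power) (simp_all add: xit_bnd K1)
qed

lemma Pr_meas:
  assumes xi: "\<xi> \<in> D_alpha S A Q \<alpha> T" and n: "n \<le> T"
  shows "Pr \<xi> n \<in> borel_measurable (Hist S A n)"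
proof -
  have "(\<lambda>h. \<Prod>s\<in>{..<n}. xit \<xi> s (fst h (Suc s)) (fst h s) (snd h s)) \<in> borel_measurable (Hist S A n)"
  proof (rule borel_measurable_prod)
    fix s assume s: "s \<in> {..<n}"
    have m: "(\<lambda>h. \<xi> s (fst h (Suc s)) (fst h s) (snd h s)) \<in> borel_measurable (Hist S A n)"
      using s n by (intro xi_comp_meas[OF xi]) auto
    show "(\<lambda>h. xit \<xi> s (fst h (Suc s)) (fst h s) (snd h s)) \<in> borel_measurable (Hist S A n)"
      unfolding xit_def using m by measurable
  qed
  then show ?thesis by (simp add: Pr_def[abs_def])
qed

lemma Cs_meas:
  assumes n: "n \<le> T"
  shows "Cs n \<in> borel_measurable (Hist S A n)"
proof -
  have "(\<lambda>h. \<Sum>s\<in>{..<n}. c s (fst h s) (snd h s)) \<in> borel_measurable (Hist S A n)"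
  proof (rule borel_measurable_sum)
    fix s assume s: "s \<in> {..<n}"
    have cm: "(\<lambda>(x, u). c s x u) \<in> borel_measurable (MB S \<Otimes>\<^sub>M MB A)"
      using c_usc s n by (intro usc_borel_pair) auto
    have "(\<lambda>h. (fst h s, snd h s)) \<in> Hist S A n \<rightarrow>\<^sub>M MB S \<Otimes>\<^sub>M MB A"
      using s by (intro measurable_Pair Hist_fst Hist_snd) auto
    from measurable_compose[OF this cm]
    show "(\<lambda>h. c s (fst h s) (snd h s)) \<in> borel_measurable (Hist S A n)" by simp
  qed
  then show ?thesis by (simp add: Cs_def[abs_def])
qed

lemma Cs_bnd:
  assumes n: "n \<le> T" and h: "h \<in> space (Hist S A n)" and Bc: "\<forall>t<T. \<forall>x\<in>S. \<forall>u\<in>A. \<bar>c t x u\<bar> \<le> Bc"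
  shows "\<bar>Cs n h\<bar> \<le> real n * Bc"
proof -
  have "\<bar>Cs n h\<bar> \<le> (\<Sum>s<n. \<bar>c s (fst h s) (snd h s)\<bar>)" unfolding Cs_def by (rule sum_abs)
  also have "\<dots> \<le> (\<Sum>s<n. Bc)"
    using Bc n hist_space[OF h] by (intro sum_mono) auto
  finally show ?thesis by simp
qed

lemma Jn_meas:
  assumes n: "n \<le> T"
  shows "(\<lambda>h. Jn m (fst h n)) \<in> borel_measurable (Hist S A n)"
proof -
  have "Jn m \<in> borel_measurable (MB S)" using Jrec_props[of "T - m"] by (intro usc_borel) auto
  from measurable_compose[OF Hist_fst[of n n S A] this] show ?thesis by simp
qed

lemma Pr_upd: "Pr \<xi> (Suc n) ((fst h)(Suc n := y), (snd h)(n := u)) = Pr \<xi> n h * xit \<xi> n y (fst h n) u"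
proof -
  have "Pr \<xi> (Suc n) ((fst h)(Suc n := y), (snd h)(n := u))
      = (\<Prod>s<n. xit \<xi> s (fst h (Suc s)) (fst h s) (snd h s)) * xit \<xi> n y (fst h n) u"
    unfolding Pr_def prod.lessThan_Suc by (intro arg_cong2[where f="(*)"] prod.cong) auto
  then show ?thesis by (simp add: Pr_def)
qed

lemma Cs_upd: "Cs (Suc n) ((fst h)(Suc n := y), (snd h)(n := u)) = Cs n h + c n (fst h n) u"
proof -
  have "Cs (Suc n) ((fst h)(Suc n := y), (snd h)(n := u))
      = (\<Sum>s<n. c s (fst h s) (snd h s)) + c n (fst h n) u"
    unfolding Cs_def sum.lessThan_Suc by (intro arg_cong2[where f="(+)"] sum.cong) auto
  then show ?thesis by (simp add: Cs_def)
qed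

lemma nu_R:
  assumes xi: "\<xi> \<in> D_alpha S A Q \<alpha> T" and n: "n < T" and xn: "xn \<in> S" and u: "u \<in> A"
  shows "(\<lambda>y. xit \<xi> n y xn u) \<in> Rset (Q xn u) S K"
proof -
  have m: "(\<lambda>(y, x, u). \<xi> n y x u) \<in> borel_measurable (MB S \<Otimes>\<^sub>M MB S \<Otimes>\<^sub>M MB A)"
    and R: "(\<lambda>y. \<xi> n y xn u) \<in> R_alpha S Q \<alpha> T xn u"
    using xi n xn u by (auto simp: D_alpha_def)
  have R': "(\<lambda>y. \<xi> n y xn u) \<in> Rset (Q xn u) S K" using R by (simp add: R_eq)
  have xu: "(xn, u) \<in> space (MB S \<Otimes>\<^sub>M MB A)" using xn u by (simp add: space_pair_measure space_restrict_space)
  have "(\<lambda>y. \<xi> n y xn u) \<in> borel_measurable (MB S)"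
    using measurable_Pair1[OF m xu] by simp
  then have mm: "(\<lambda>y. xit \<xi> n y xn u) \<in> borel_measurable (MB S)"
    unfolding xit_def by measurable
  have ae: "AE y in Q xn u. 0 \<le> \<xi> n y xn u \<and> \<xi> n y xn u \<le> K" using R' by (simp add: Rset_def)
  have "(\<integral>y. xit \<xi> n y xn u \<partial>Q xn u) = (\<integral>y. \<xi> n y xn u \<partial>Q xn u)"
  proof (rule integral_cong_AE)
    show "(\<lambda>y. xit \<xi> n y xn u) \<in> borel_measurable (Q xn u)"
      using mm by (simp add: measurable_cong_sets[OF Qsets[OF xn u] refl])
    show "(\<lambda>y. \<xi> n y xn u) \<in> borel_measurable (Q xn u)"
      using measurable_Pair1[OF m xu] by (simp add: measurable_cong_sets[OF Qsets[OF xn u] refl])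
    show "AE y in Q xn u. xit \<xi> n y xn u = \<xi> n y xn u"
      using ae by eventually_elim (simp add: xit_def)
  qed
  also have "\<dots> = 1" using R' by (simp add: Rset_def)
  finally show ?thesis using mm xit_bnd by (auto simp: Rset_def)
qed


lemma DP:
  fixes g :: "nat \<Rightarrow> 's \<Rightarrow> 'a"
  assumes g: "\<forall>t<T. g t \<in> MB S \<rightarrow>\<^sub>M MB A"
    and gopt: "\<forall>t<T. \<forall>x\<in>S. c t x (g t x) + phi S Q \<alpha> T (Jn (Suc t)) x (g t x) \<le> Jn t x + e"
    and x: "x \<in> S" and xi: "\<xi> \<in> D_alpha S A Q \<alpha> T"
  shows "n \<le> T \<Longrightarrow> (\<integral>h. Pr \<xi> n h \<partial>path_meas S A Q (markov_policy A g) x n) = 1 \<and>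
     (\<integral>h. (Cs n h + Jn n (fst h n)) * Pr \<xi> n h \<partial>path_meas S A Q (markov_policy A g) x n) \<le> Jn 0 x + real n * e"
proof (induction n)
  case 0
  let ?h0 = "((\<lambda>i\<in>{..0::nat}. x), (\<lambda>i\<in>{..<0::nat}. undefined :: 'a))"
  have h0: "?h0 \<in> space (Hist S A 0)"
    using x by (simp add: Hist_def space_pair_measure space_PiM space_restrict_space PiE_def extensional_def)
  have P0: "path_meas S A Q (markov_policy A g) x 0 = return (Hist S A 0) ?h0" by simp
  have m1: "Pr \<xi> 0 \<in> borel_measurable (Hist S A 0)" by (rule Pr_meas[OF xi]) simp
  have m2: "(\<lambda>h. (Cs 0 h + Jn 0 (fst h 0)) * Pr \<xi> 0 h) \<in> borel_measurable (Hist S A 0)"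
    using m1 Cs_meas[of 0] Jn_meas[of 0 0] by measurable
  show ?case unfolding P0 integral_return[OF h0 m1] integral_return[OF h0 m2]
    by (simp add: Pr_def Cs_def)
next
  case (Suc n)
  have n: "n < T" "n \<le> T" "Suc n \<le> T" using Suc.prems by auto
  note IH = Suc.IH[OF n(2)]
  let ?\<pi> = "markov_policy A g"
  let ?P = "path_meas S A Q ?\<pi> x n"
  have pi: "?\<pi> \<in> policies S A T" by (rule markov_in[OF g])
  have setsP: "sets ?P = sets (Hist S A n)" by (rule path_sets(1)[OF pi x n(2)])
  have spP: "space ?P = space (Hist S A n)" by (rule sets_eq_imp_space_eq[OF setsP])
  interpret PP: prob_space ?P by (rule path_sets(2)[OF pi x n(2)])
  have measP: "borel_measurable ?P = borel_measurable (Hist S A n)"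
    by (rule measurable_cong_sets[OF setsP refl])
  obtain Bc where Bc: "\<forall>t<T. \<forall>x\<in>S. \<forall>u\<in>A. \<bar>c t x u\<bar> \<le> Bc" using c_unif by blast
  obtain BJ where BJ: "\<forall>k\<le>T. \<forall>x\<in>S. \<bar>Jk k x\<bar> \<le> BJ" using J_unif by blast
  define F1 where "F1 = Pr \<xi> (Suc n)"
  define F2 where "F2 z = (Cs (Suc n) z + Jn (Suc n) (fst z (Suc n))) * Pr \<xi> (Suc n) z" for z
  have F1m: "F1 \<in> borel_measurable (Hist S A (Suc n))" unfolding F1_def by (rule Pr_meas[OF xi n(3)])
  have F2m: "F2 \<in> borel_measurable (Hist S A (Suc n))"
    unfolding F2_def[abs_def] using Pr_meas[OF xi n(3)] Cs_meas[OF n(3)] Jn_meas[OF n(3), of "Suc n"] by measurable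
  have F1b: "\<bar>F1 z\<bar> \<le> K ^ Suc n" for z using Pr_bnd[of \<xi> "Suc n" z] by (simp add: F1_def)
  have F2b: "\<bar>F2 z\<bar> \<le> (real (Suc n) * Bc + BJ) * K ^ Suc n" if z: "z \<in> space (Hist S A (Suc n))" for z
  proof -
    have "\<bar>Cs (Suc n) z\<bar> \<le> real (Suc n) * Bc" by (rule Cs_bnd[OF n(3) z Bc])
    moreover have "\<bar>Jn (Suc n) (fst z (Suc n))\<bar> \<le> BJ" using BJ hist_space(1)[OF z, of "Suc n"] by simp
    ultimately have "\<bar>Cs (Suc n) z + Jn (Suc n) (fst z (Suc n))\<bar> \<le> real (Suc n) * Bc + BJ" by linarith
    then show ?thesis unfolding F2_def abs_mult using Pr_bnd[of \<xi> "Suc n" z]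
      by (intro mult_mono) auto
  qed
  have E: "(\<integral>z. F1 z \<partial>stepk ?\<pi> n h) = Pr \<xi> n h \<and>
      (\<integral>z. F2 z \<partial>stepk ?\<pi> n h) = Pr \<xi> n h * (Cs n h + c n (fst h n) (g n (fst h n))
          + (\<integral>y. Jn (Suc n) y * xit \<xi> n y (fst h n) (g n (fst h n)) \<partial>Q (fst h n) (g n (fst h n))))"
    if h: "h \<in> space (Hist S A n)" for h
  proof -
    define xn where "xn = fst h n"
    define u where "u = g n xn"
    have xn: "xn \<in> S" using hist_space(1)[OF h] by (simp add: xn_def)
    have u: "u \<in> A" using measurable_space[OF g[rule_format, OF n(1)]] xn by (simp add: u_def space_restrict_space)
    have nuR: "(\<lambda>y. xit \<xi> n y xn u) \<in> Rset (Q xn u) S K" by (rule nu_R[OF xi n(1) xn u])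
    have Jm': "Jn (Suc n) \<in> borel_measurable (MB S)" using Jrec_props[of "T - Suc n"] by (intro usc_borel) auto
    have Jb': "\<And>y. y \<in> S \<Longrightarrow> \<bar>Jn (Suc n) y\<bar> \<le> BJ" using BJ by simp
    interpret R: rsetting "Q xn u" S "Jn (Suc n)" BJ K by (rule rs[OF xn u Jm' Jb'])
    have iv: "integrable (Q xn u) (\<lambda>y. xit \<xi> n y xn u)" by (rule R.R_props(1)[OF nuR])
    have ivJ: "integrable (Q xn u) (\<lambda>y. Jn (Suc n) y * xit \<xi> n y xn u)" by (rule R.R_props(2)[OF nuR])
    have int1: "(\<integral>y. xit \<xi> n y xn u \<partial>Q xn u) = 1" using nuR by (simp add: Rset_def)
    have "(\<integral>z. F1 z \<partial>stepk ?\<pi> n h) = (\<integral>y. F1 ((fst h)(Suc n := y), (snd h)(n := u)) \<partial>Q xn u)"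
      unfolding xn_def u_def by (rule integral_stepk[OF g n(1) h F1m F1b])
    also have "\<dots> = (\<integral>y. Pr \<xi> n h * xit \<xi> n y xn u \<partial>Q xn u)"
      by (simp add: F1_def Pr_upd xn_def)
    also have "\<dots> = Pr \<xi> n h" using int1 by simp
    finally have e1: "(\<integral>z. F1 z \<partial>stepk ?\<pi> n h) = Pr \<xi> n h" .
    have "(\<integral>z. F2 z \<partial>stepk ?\<pi> n h) = (\<integral>y. F2 ((fst h)(Suc n := y), (snd h)(n := u)) \<partial>Q xn u)"
      unfolding xn_def u_def by (rule integral_stepk[OF g n(1) h F2m F2b])
    also have "\<dots> = (\<integral>y. (Pr \<xi> n h * (Cs n h + c n xn u)) * xit \<xi> n y xn u
        + Pr \<xi> n h * (Jn (Suc n) y * xit \<xi> n y xn u) \<partial>Q xn u)"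
      by (rule Bochner_Integration.integral_cong[OF refl]) (simp add: F2_def Pr_upd Cs_upd xn_def algebra_simps)
    also have "\<dots> = Pr \<xi> n h * (Cs n h + c n xn u) * (\<integral>y. xit \<xi> n y xn u \<partial>Q xn u)
        + Pr \<xi> n h * (\<integral>y. Jn (Suc n) y * xit \<xi> n y xn u \<partial>Q xn u)"
      using iv ivJ by simp
    also have "\<dots> = Pr \<xi> n h * (Cs n h + c n xn u + (\<integral>y. Jn (Suc n) y * xit \<xi> n y xn u \<partial>Q xn u))"
      using int1 by (simp add: algebra_simps)
    finally show ?thesis using e1 by (simp add: xn_def u_def)
  qed
  have Eb: "Pr \<xi> n h * (Cs n h + c n (fst h n) (g n (fst h n))
          + (\<integral>y. Jn (Suc n) y * xit \<xi> n y (fst h n) (g n (fst h n)) \<partial>Q (fst h n) (g n (fst h n))))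
      \<le> (Cs n h + Jn n (fst h n)) * Pr \<xi> n h + e * Pr \<xi> n h
    \<and> \<bar>Pr \<xi> n h * (Cs n h + c n (fst h n) (g n (fst h n))
          + (\<integral>y. Jn (Suc n) y * xit \<xi> n y (fst h n) (g n (fst h n)) \<partial>Q (fst h n) (g n (fst h n))))\<bar>
      \<le> K ^ n * (real n * Bc + Bc + BJ)"
    if h: "h \<in> space (Hist S A n)" for h
  proof -
    define xn where "xn = fst h n"
    define u where "u = g n xn"
    have xn: "xn \<in> S" using hist_space(1)[OF h] by (simp add: xn_def)
    have u: "u \<in> A" using measurable_space[OF g[rule_format, OF n(1)]] xn by (simp add: u_def space_restrict_space)
    have nuR: "(\<lambda>y. xit \<xi> n y xn u) \<in> Rset (Q xn u) S K" by (rule nu_R[OF xi n(1) xn u])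
    have Jm': "Jn (Suc n) \<in> borel_measurable (MB S)" using Jrec_props[of "T - Suc n"] by (intro usc_borel) auto
    have Jb': "\<And>y. y \<in> S \<Longrightarrow> \<bar>Jn (Suc n) y\<bar> \<le> BJ" using BJ by simp
    interpret R: rsetting "Q xn u" S "Jn (Suc n)" BJ K by (rule rs[OF xn u Jm' Jb'])
    define I where "I = (\<integral>y. Jn (Suc n) y * xit \<xi> n y xn u \<partial>Q xn u)"
    have I1: "I \<le> phi S Q \<alpha> T (Jn (Suc n)) xn u" unfolding I_def by (rule phi_facts(2)[OF xn u Jm' Jb' nuR])
    have I2: "\<bar>I\<bar> \<le> BJ" using R.R_props(3,4)[OF nuR] by (simp add: I_def)
    have go: "c n xn u + phi S Q \<alpha> T (Jn (Suc n)) xn u \<le> Jn n xn + e"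
      using gopt n(1) xn by (simp add: u_def)
    have Pb: "0 \<le> Pr \<xi> n h" "Pr \<xi> n h \<le> K ^ n" using Pr_bnd by auto
    have "Pr \<xi> n h * (Cs n h + c n xn u + I) \<le> Pr \<xi> n h * (Cs n h + Jn n xn + e)"
      using I1 go Pb by (intro mult_left_mono) auto
    moreover have "\<bar>c n xn u\<bar> \<le> Bc" using Bc n(1) xn u by blast
    then have "\<bar>Cs n h + c n xn u + I\<bar> \<le> real n * Bc + Bc + BJ"
      using Cs_bnd[OF n(2) h Bc] I2 by linarith
    then have "\<bar>Pr \<xi> n h * (Cs n h + c n xn u + I)\<bar> \<le> K ^ n * (real n * Bc + Bc + BJ)"
      unfolding abs_mult using Pb by (intro mult_mono) auto
    ultimately show ?thesis by (simp add: I_def xn_def u_def algebra_simps)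
  qed
  note ip = integral_path_Suc[OF g n(1) x]
  have prm: "Pr \<xi> n \<in> borel_measurable ?P" unfolding measP by (rule Pr_meas[OF xi n(2)])
  have iPr: "integrable ?P (Pr \<xi> n)"
    by (rule PP.integrable_const_bound[where B="K ^ n"]) (use Pr_bnd prm in auto)
  have part1: "(\<integral>z. Pr \<xi> (Suc n) z \<partial>path_meas S A Q ?\<pi> x (Suc n)) = 1"
  proof -
    have "(\<integral>z. Pr \<xi> (Suc n) z \<partial>path_meas S A Q ?\<pi> x (Suc n)) = (\<integral>h. (\<integral>z. F1 z \<partial>stepk ?\<pi> n h) \<partial>?P)"
      using ip(1)[OF F1m F1b] by (simp add: F1_def)
    also have "\<dots> = (\<integral>h. Pr \<xi> n h \<partial>?P)"
      by (rule Bochner_Integration.integral_cong[OF refl]) (use E spP in auto)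
    finally show ?thesis using IH by simp
  qed
  have G2m: "(\<lambda>h. \<integral>z. F2 z \<partial>stepk ?\<pi> n h) \<in> borel_measurable ?P" by (rule ip(2)[OF F2m F2b])
  have iG2: "integrable ?P (\<lambda>h. \<integral>z. F2 z \<partial>stepk ?\<pi> n h)"
  proof (rule PP.integrable_const_bound[OF _ G2m])
    show "AE h in ?P. norm (\<integral>z. F2 z \<partial>stepk ?\<pi> n h) \<le> K ^ n * (real n * Bc + Bc + BJ)"
    proof (rule AE_I2)
      fix h assume "h \<in> space ?P"
      then have h: "h \<in> space (Hist S A n)" using spP by simp
      show "norm (\<integral>z. F2 z \<partial>stepk ?\<pi> n h) \<le> K ^ n * (real n * Bc + Bc + BJ)"
        using E[OF h] Eb[OF h] by simp
    qed
  qed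
  have Hm: "(\<lambda>h. (Cs n h + Jn n (fst h n)) * Pr \<xi> n h) \<in> borel_measurable ?P"
    unfolding measP using Pr_meas[OF xi n(2)] Cs_meas[OF n(2)] Jn_meas[OF n(2), of n] by measurable
  have iH: "integrable ?P (\<lambda>h. (Cs n h + Jn n (fst h n)) * Pr \<xi> n h)"
  proof (rule PP.integrable_const_bound[OF _ Hm])
    show "AE h in ?P. norm ((Cs n h + Jn n (fst h n)) * Pr \<xi> n h) \<le> (real n * Bc + BJ) * K ^ n"
    proof (rule AE_I2)
      fix h assume "h \<in> space ?P"
      then have h: "h \<in> space (Hist S A n)" using spP by simp
      have "\<bar>Jn n (fst h n)\<bar> \<le> BJ" using BJ hist_space(1)[OF h, of n] by simp
      then have "\<bar>Cs n h + Jn n (fst h n)\<bar> \<le> real n * Bc + BJ"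
        using Cs_bnd[OF n(2) h Bc] by linarith
      then show "norm ((Cs n h + Jn n (fst h n)) * Pr \<xi> n h) \<le> (real n * Bc + BJ) * K ^ n"
        unfolding real_norm_def abs_mult using Pr_bnd[of \<xi> n h] by (intro mult_mono) auto
    qed
  qed
  have part2: "(\<integral>z. (Cs (Suc n) z + Jn (Suc n) (fst z (Suc n))) * Pr \<xi> (Suc n) z \<partial>path_meas S A Q ?\<pi> x (Suc n))
      \<le> Jn 0 x + real (Suc n) * e"
  proof -
    have "(\<integral>z. (Cs (Suc n) z + Jn (Suc n) (fst z (Suc n))) * Pr \<xi> (Suc n) z \<partial>path_meas S A Q ?\<pi> x (Suc n))
        = (\<integral>h. (\<integral>z. F2 z \<partial>stepk ?\<pi> n h) \<partial>?P)"
      using ip(1)[OF F2m F2b] by (simp add: F2_def)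
    also have "\<dots> \<le> (\<integral>h. (Cs n h + Jn n (fst h n)) * Pr \<xi> n h + e * Pr \<xi> n h \<partial>?P)"
    proof (rule integral_mono[OF iG2])
      show "integrable ?P (\<lambda>h. (Cs n h + Jn n (fst h n)) * Pr \<xi> n h + e * Pr \<xi> n h)"
        using iH iPr by simp
      fix h assume "h \<in> space ?P"
      then have h: "h \<in> space (Hist S A n)" using spP by simp
      show "(\<integral>z. F2 z \<partial>stepk ?\<pi> n h) \<le> (Cs n h + Jn n (fst h n)) * Pr \<xi> n h + e * Pr \<xi> n h"
        using E[OF h] Eb[OF h] by simp
    qed
    also have "\<dots> = (\<integral>h. (Cs n h + Jn n (fst h n)) * Pr \<xi> n h \<partial>?P) + e * (\<integral>h. Pr \<xi> n h \<partial>?P)"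
      using iH iPr by simp
    also have "\<dots> \<le> Jn 0 x + real (Suc n) * e" using IH by (simp add: algebra_simps)
    finally show ?thesis .
  qed
  show ?case using part1 part2 by simp
qed

end

lemma prob_int_abs_le:
  fixes f :: "_ \<Rightarrow> real"
  assumes M: "prob_space M" and f: "f \<in> borel_measurable M" and b: "\<And>x. x \<in> space M \<Longrightarrow> \<bar>f x\<bar> \<le> C"
  shows "\<bar>\<integral>x. f x \<partial>M\<bar> \<le> C"
proof -
  interpret prob_space M by fact
  have i: "integrable M f" by (rule integrable_const_bound[where B=C]) (use b f in auto)
  have "(\<integral>x. f x \<partial>M) \<le> (\<integral>x. C \<partial>M)"
  proof (rule integral_mono[OF i])
    fix x assume "x \<in> space M" from b[OF this] show "f x \<le> C" by linarith
  qed simp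
  moreover have "(\<integral>x. - C \<partial>M) \<le> (\<integral>x. f x \<partial>M)"
  proof (rule integral_mono[OF _ i])
    fix x assume "x \<in> space M" from b[OF this] show "- C \<le> f x" by linarith
  qed simp
  ultimately show ?thesis by (simp add: prob_space)
qed

context mdp begin

lemma one_D: "(\<lambda>t y x u. 1) \<in> D_alpha S A Q \<alpha> T"
proof -
  have "(\<lambda>y. 1::real) \<in> R_alpha S Q \<alpha> T x u" if "x \<in> S" "u \<in> A" for x u
  proof -
    interpret prob_space "Q x u" by (rule Qprob[OF that])
    show ?thesis using K1 by (simp add: R_eq Rset_def prob_space)
  qed
  then show ?thesis by (simp add: D_alpha_def)
qed

lemma int_eq:
  assumes pi: "\<pi> \<in> policies S A T" and x: "x \<in> S" and xi: "\<xi> \<in> D_alpha S A Q \<alpha> T"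
  shows "(\<integral>\<omega>. total_cost T c cT \<omega> * (\<Prod>t<T. \<xi> t (fst \<omega> (Suc t)) (fst \<omega> t) (snd \<omega> t)) \<partial>path_meas S A Q \<pi> x T)
    = (\<integral>\<omega>. (Cs T \<omega> + Jn T (fst \<omega> T)) * Pr \<xi> T \<omega> \<partial>path_meas S A Q \<pi> x T)"
proof (rule integral_cong_AE)
  have setsP: "sets (path_meas S A Q \<pi> x T) = sets (Hist S A T)" by (rule path_sets(1)[OF pi x order.refl])
  have measP: "borel_measurable (path_meas S A Q \<pi> x T) = borel_measurable (Hist S A T)"
    by (rule measurable_cong_sets[OF setsP refl])
  have cTm: "(\<lambda>\<omega>. cT (fst \<omega> T)) \<in> borel_measurable (Hist S A T)"
    using measurable_compose[OF Hist_fst[of T T S A] usc_borel[OF cT_usc(1)]] by simp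
  have prm: "(\<lambda>\<omega>. \<Prod>t<T. \<xi> t (fst \<omega> (Suc t)) (fst \<omega> t) (snd \<omega> t)) \<in> borel_measurable (Hist S A T)"
  proof (rule borel_measurable_prod)
    fix t assume "t \<in> {..<T}"
    then show "(\<lambda>\<omega>. \<xi> t (fst \<omega> (Suc t)) (fst \<omega> t) (snd \<omega> t)) \<in> borel_measurable (Hist S A T)"
      by (intro xi_comp_meas[OF xi]) auto
  qed
  have tcm: "total_cost T c cT \<in> borel_measurable (Hist S A T)"
    unfolding total_cost_def[abs_def] using cTm Cs_meas[OF order.refl] by (simp add: Cs_def[symmetric])
  show "(\<lambda>\<omega>. total_cost T c cT \<omega> * (\<Prod>t<T. \<xi> t (fst \<omega> (Suc t)) (fst \<omega> t) (snd \<omega> t))) \<in> borel_measurable (path_meas S A Q \<pi> x T)"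
    unfolding measP using tcm prm by measurable
  show "(\<lambda>\<omega>. (Cs T \<omega> + Jn T (fst \<omega> T)) * Pr \<xi> T \<omega>) \<in> borel_measurable (path_meas S A Q \<pi> x T)"
    unfolding measP using Pr_meas[OF xi order.refl] Cs_meas[OF order.refl] Jn_meas[OF order.refl, of T] by measurable
  show "AE \<omega> in path_meas S A Q \<pi> x T. total_cost T c cT \<omega> * (\<Prod>t<T. \<xi> t (fst \<omega> (Suc t)) (fst \<omega> t) (snd \<omega> t))
      = (Cs T \<omega> + Jn T (fst \<omega> T)) * Pr \<xi> T \<omega>"
    using path_AE[OF pi x xi order.refl]
  proof eventually_elim
    case (elim \<omega>)
    have "(\<Prod>t<T. \<xi> t (fst \<omega> (Suc t)) (fst \<omega> t) (snd \<omega> t)) = Pr \<xi> T \<omega>"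
      unfolding Pr_def using elim by (intro prod.cong) (auto simp: okp_def xit_def)
    then show ?case by (simp add: total_cost_def Cs_def)
  qed
qed

lemma int_bnd:
  assumes pi: "\<pi> \<in> policies S A T" and x: "x \<in> S" and xi: "\<xi> \<in> D_alpha S A Q \<alpha> T"
    and Bc: "\<forall>t<T. \<forall>x\<in>S. \<forall>u\<in>A. \<bar>c t x u\<bar> \<le> Bc" and BJ: "\<forall>k\<le>T. \<forall>x\<in>S. \<bar>Jk k x\<bar> \<le> BJ"
  shows "\<bar>\<integral>\<omega>. (Cs T \<omega> + Jn T (fst \<omega> T)) * Pr \<xi> T \<omega> \<partial>path_meas S A Q \<pi> x T\<bar> \<le> (real T * Bc + BJ) * K ^ T"
proof (rule prob_int_abs_le)
  have setsP: "sets (path_meas S A Q \<pi> x T) = sets (Hist S A T)" by (rule path_sets(1)[OF pi x order.refl])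
  have measP: "borel_measurable (path_meas S A Q \<pi> x T) = borel_measurable (Hist S A T)"
    by (rule measurable_cong_sets[OF setsP refl])
  show "prob_space (path_meas S A Q \<pi> x T)" by (rule path_sets(2)[OF pi x order.refl])
  show "(\<lambda>\<omega>. (Cs T \<omega> + Jn T (fst \<omega> T)) * Pr \<xi> T \<omega>) \<in> borel_measurable (path_meas S A Q \<pi> x T)"
    unfolding measP using Pr_meas[OF xi order.refl] Cs_meas[OF order.refl] Jn_meas[OF order.refl, of T] by measurable
  fix \<omega> assume "\<omega> \<in> space (path_meas S A Q \<pi> x T)"
  then have h: "\<omega> \<in> space (Hist S A T)" using sets_eq_imp_space_eq[OF setsP] by simp
  have "\<bar>Jk 0 (fst \<omega> T)\<bar> \<le> BJ" using BJ hist_space(1)[OF h, of T] by blast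
  then have "\<bar>Jn T (fst \<omega> T)\<bar> \<le> BJ" by simp
  then have "\<bar>Cs T \<omega> + Jn T (fst \<omega> T)\<bar> \<le> real T * Bc + BJ" using Cs_bnd[OF order.refl h Bc] by linarith
  then show "\<bar>(Cs T \<omega> + Jn T (fst \<omega> T)) * Pr \<xi> T \<omega>\<bar> \<le> (real T * Bc + BJ) * K ^ T"
    unfolding abs_mult using Pr_bnd[of \<xi> T \<omega>] by (intro mult_mono) auto
qed

lemma v_facts:
  assumes t: "t < T"
  shows "usc_on (S \<times> A) (\<lambda>(x, u). c t x u + phi S Q \<alpha> T (Jn (Suc t)) x u)"
    "\<exists>L. \<forall>x\<in>S. \<forall>u\<in>A. L \<le> c t x u + phi S Q \<alpha> T (Jn (Suc t)) x u"
    "\<And>x. Jn t x = (INF u\<in>A. c t x u + phi S Q \<alpha> T (Jn (Suc t)) x u)"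
proof -
  obtain Bk where Bk: "\<And>x. x \<in> S \<Longrightarrow> \<bar>Jn (Suc t) x\<bar> \<le> Bk" using Jrec_props[of "T - Suc t"] by auto
  have Jm: "Jn (Suc t) \<in> borel_measurable (MB S)" using Jrec_props[of "T - Suc t"] by (intro usc_borel) auto
  obtain Bc where Bc: "\<And>x u. x \<in> S \<Longrightarrow> u \<in> A \<Longrightarrow> \<bar>c t x u\<bar> \<le> Bc" using c_bnd[OF t] by blast
  have "usc_on (S \<times> A) (\<lambda>p. (\<lambda>(x, u). c t x u) p + (\<lambda>(x, u). phi S Q \<alpha> T (Jn (Suc t)) x u) p)"
    by (rule usc_add) (use c_usc t in simp, rule phi_usc[OF Jm Bk])
  then show "usc_on (S \<times> A) (\<lambda>(x, u). c t x u + phi S Q \<alpha> T (Jn (Suc t)) x u)" by (simp add: case_prod_beta')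
  have "- (Bc + Bk) \<le> c t x u + phi S Q \<alpha> T (Jn (Suc t)) x u" if "x \<in> S" "u \<in> A" for x u
    using Bc[OF that] phi_facts(1)[OF that Jm Bk] by linarith
  then show "\<exists>L. \<forall>x\<in>S. \<forall>u\<in>A. L \<le> c t x u + phi S Q \<alpha> T (Jn (Suc t)) x u" by blast
  have eq: "T - t = Suc (T - Suc t)" using t by simp
  have eq2: "T - Suc (T - Suc t) = t" using t by simp
  fix x
  have "Jn t x = Jk (Suc (T - Suc t)) x" by (simp only: eq)
  also have "\<dots> = (INF u\<in>A. c (T - Suc (T - Suc t)) x u + phi S Q \<alpha> T (Jk (T - Suc t)) x u)" by simp
  finally show "Jn t x = (INF u\<in>A. c t x u + phi S Q \<alpha> T (Jn (Suc t)) x u)" by (simp only: eq2)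
qed

lemma good_policy:
  assumes e: "0 < \<epsilon>"
  shows "\<exists>g. (\<forall>t<T. g t \<in> MB S \<rightarrow>\<^sub>M MB A) \<and>
      (\<forall>x\<in>S. rho S A Q \<alpha> T (markov_policy A g) x (total_cost T c cT) \<le> J_alpha S A Q \<alpha> T c cT 0 x + \<epsilon>)"
proof -
  define e where "e = \<epsilon> / real T"
  have e0: "0 < e" using e T1 by (simp add: e_def)
  have "\<forall>t. \<exists>g. t < T \<longrightarrow> (g \<in> MB S \<rightarrow>\<^sub>M MB A \<and> (\<forall>x\<in>S. c t x (g x) + phi S Q \<alpha> T (Jn (Suc t)) x (g x) \<le> Jn t x + e))"
  proof (intro allI)
    fix t show "\<exists>g. t < T \<longrightarrow> (g \<in> MB S \<rightarrow>\<^sub>M MB A \<and> (\<forall>x\<in>S. c t x (g x) + phi S Q \<alpha> T (Jn (Suc t)) x (g x) \<le> Jn t x + e))"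
    proof (cases "t < T")
      case True
      obtain L where L: "\<forall>x\<in>S. \<forall>u\<in>A. L \<le> c t x u + phi S Q \<alpha> T (Jn (Suc t)) x u" using v_facts(2)[OF True] by blast
      obtain g where "g \<in> MB S \<rightarrow>\<^sub>M MB A"
        "\<forall>x\<in>S. c t x (g x) + phi S Q \<alpha> T (Jn (Suc t)) x (g x) \<le> (INF u\<in>A. c t x u + phi S Q \<alpha> T (Jn (Suc t)) x u) + e"
        using selector[OF v_facts(1)[OF True] A_ne _ e0, of L] L by blast
      then show ?thesis using v_facts(3)[OF True] by auto
    qed simp
  qed
  then obtain g where g: "\<And>t. t < T \<Longrightarrow> g t \<in> MB S \<rightarrow>\<^sub>M MB A"
    "\<And>t. t < T \<Longrightarrow> \<forall>x\<in>S. c t x (g t x) + phi S Q \<alpha> T (Jn (Suc t)) x (g t x) \<le> Jn t x + e"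
    by metis
  have gm: "\<forall>t<T. g t \<in> MB S \<rightarrow>\<^sub>M MB A" using g(1) by blast
  have gopt: "\<forall>t<T. \<forall>x\<in>S. c t x (g t x) + phi S Q \<alpha> T (Jn (Suc t)) x (g t x) \<le> Jn t x + e"
    using g(2) by blast
  have "rho S A Q \<alpha> T (markov_policy A g) x (total_cost T c cT) \<le> J_alpha S A Q \<alpha> T c cT 0 x + \<epsilon>"
    if x: "x \<in> S" for x
    unfolding rho_def
  proof (rule cSUP_least)
    show "D_alpha S A Q \<alpha> T \<noteq> {}" using one_D by auto
    fix \<xi> assume xi: "\<xi> \<in> D_alpha S A Q \<alpha> T"
    have "(\<integral>\<omega>. total_cost T c cT \<omega> * (\<Prod>t<T. \<xi> t (fst \<omega> (Suc t)) (fst \<omega> t) (snd \<omega> t)) \<partial>path_meas S A Q (markov_policy A g) x T)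
      = (\<integral>\<omega>. (Cs T \<omega> + Jn T (fst \<omega> T)) * Pr \<xi> T \<omega> \<partial>path_meas S A Q (markov_policy A g) x T)"
      by (rule int_eq[OF markov_in[OF gm] x xi])
    also have "\<dots> \<le> Jn 0 x + real T * e" using DP[OF gm gopt x xi order.refl] by simp
    also have "\<dots> = J_alpha S A Q \<alpha> T c cT 0 x + \<epsilon>" using T1 by (simp add: J_alpha_def e_def)
    finally show "(\<integral>\<omega>. total_cost T c cT \<omega> * (\<Prod>t<T. \<xi> t (fst \<omega> (Suc t)) (fst \<omega> t) (snd \<omega> t)) \<partial>path_meas S A Q (markov_policy A g) x T)
      \<le> J_alpha S A Q \<alpha> T c cT 0 x + \<epsilon>" .
  qed
  then show ?thesis using gm by blast
qed

lemma rho_lower: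
  assumes pi: "\<pi> \<in> policies S A T" and x: "x \<in> S"
    and Bc: "\<forall>t<T. \<forall>x\<in>S. \<forall>u\<in>A. \<bar>c t x u\<bar> \<le> Bc" and BJ: "\<forall>k\<le>T. \<forall>x\<in>S. \<bar>Jk k x\<bar> \<le> BJ"
  shows "- ((real T * Bc + BJ) * K ^ T) \<le> rho S A Q \<alpha> T \<pi> x (total_cost T c cT)"
proof -
  let ?I = "\<lambda>\<xi>. \<integral>\<omega>. total_cost T c cT \<omega> * (\<Prod>t<T. \<xi> t (fst \<omega> (Suc t)) (fst \<omega> t) (snd \<omega> t)) \<partial>path_meas S A Q \<pi> x T"
  have b: "\<bar>?I \<xi>\<bar> \<le> (real T * Bc + BJ) * K ^ T" if "\<xi> \<in> D_alpha S A Q \<alpha> T" for \<xi>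
    using int_eq[OF pi x that] int_bnd[OF pi x that Bc BJ] by simp
  have bdd: "bdd_above (?I ` D_alpha S A Q \<alpha> T)"
    by (rule bdd_aboveI2[where M="(real T * Bc + BJ) * K ^ T"]) (use b in \<open>simp add: abs_le_iff\<close>)
  have "?I (\<lambda>t y x u. 1) \<le> rho S A Q \<alpha> T \<pi> x (total_cost T c cT)"
    unfolding rho_def by (rule cSUP_upper[OF one_D bdd])
  moreover have "- ((real T * Bc + BJ) * K ^ T) \<le> ?I (\<lambda>t y x u. 1)" using b[OF one_D] by (simp add: abs_le_iff)
  ultimately show ?thesis by linarith
qed

theorem main:
  "(\<forall>t\<le>T. usc_on S (J_alpha S A Q \<alpha> T c cT t) \<and> bounded_on S (J_alpha S A Q \<alpha> T c cT t))
    \<and> (\<forall>\<epsilon>>0. \<exists>g. (\<forall>t<T. g t \<in> MB S \<rightarrow>\<^sub>M MB A) \<and>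
          (\<forall>x\<in>S. rho S A Q \<alpha> T (markov_policy A g) x (total_cost T c cT)
                   \<le> J_alpha S A Q \<alpha> T c cT 0 x + \<epsilon>))
    \<and> (\<forall>x\<in>S. (INF \<pi> \<in> policies S A T. rho S A Q \<alpha> T \<pi> x (total_cost T c cT))
                   \<le> J_alpha S A Q \<alpha> T c cT 0 x)"
proof (intro conjI allI impI ballI)
  fix t assume t: "t \<le> T"
  have "T - t \<le> T" by simp
  from Jrec_props[OF this]
  show "usc_on S (J_alpha S A Q \<alpha> T c cT t)" "bounded_on S (J_alpha S A Q \<alpha> T c cT t)"
    by (auto simp: J_alpha_def bounded_on_def)
next
  fix \<epsilon> :: real assume "0 < \<epsilon>"
  then show "\<exists>g. (\<forall>t<T. g t \<in> MB S \<rightarrow>\<^sub>M MB A) \<and>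
          (\<forall>x\<in>S. rho S A Q \<alpha> T (markov_policy A g) x (total_cost T c cT) \<le> J_alpha S A Q \<alpha> T c cT 0 x + \<epsilon>)"
    by (rule good_policy)
next
  fix x assume x: "x \<in> S"
  obtain Bc where Bc: "\<forall>t<T. \<forall>x\<in>S. \<forall>u\<in>A. \<bar>c t x u\<bar> \<le> Bc" using c_unif by blast
  obtain BJ where BJ: "\<forall>k\<le>T. \<forall>x\<in>S. \<bar>Jk k x\<bar> \<le> BJ" using J_unif by blast
  have bdd: "bdd_below ((\<lambda>\<pi>. rho S A Q \<alpha> T \<pi> x (total_cost T c cT)) ` policies S A T)"
    by (rule bdd_belowI2[where m="- ((real T * Bc + BJ) * K ^ T)"]) (rule rho_lower[OF _ x Bc BJ])
  show "(INF \<pi> \<in> policies S A T. rho S A Q \<alpha> T \<pi> x (total_cost T c cT)) \<le> J_alpha S A Q \<alpha> T c cT 0 x"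
  proof (rule field_le_epsilon)
    fix \<epsilon> :: real assume e: "0 < \<epsilon>"
    obtain g where g: "\<forall>t<T. g t \<in> MB S \<rightarrow>\<^sub>M MB A"
      "\<forall>x\<in>S. rho S A Q \<alpha> T (markov_policy A g) x (total_cost T c cT) \<le> J_alpha S A Q \<alpha> T c cT 0 x + \<epsilon>"
      using good_policy[OF e] by blast
    have "(INF \<pi> \<in> policies S A T. rho S A Q \<alpha> T \<pi> x (total_cost T c cT))
        \<le> rho S A Q \<alpha> T (markov_policy A g) x (total_cost T c cT)"
      by (rule cINF_lower[OF bdd markov_in[OF g(1)]])
    also have "\<dots> \<le> J_alpha S A Q \<alpha> T c cT 0 x + \<epsilon>" using g(2) x by blast
    finally show "(INF \<pi> \<in> policies S A T. rho S A Q \<alpha> T \<pi> x (total_cost T c cT)) \<le> J_alpha S A Q \<alpha> T c cT 0 x + \<epsilon>" .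
  qed
qed

end

theorem theorem3:
  fixes S :: "'s::polish_space set" and A :: "'a::polish_space set"
    and W :: "'w::polish_space set" and T :: nat
    and f :: "'s \<Rightarrow> 'a \<Rightarrow> 'w \<Rightarrow> 's" and PD :: "'w measure"
    and c :: "nat \<Rightarrow> 's \<Rightarrow> 'a \<Rightarrow> real" and cT :: "'s \<Rightarrow> real" and \<alpha> :: real
  assumes S: "S \<in> sets borel" "S \<noteq> {}"
    and A: "A \<in> sets borel" "A \<noteq> {}"
    and W: "W \<in> sets borel"
    and T: "1 \<le> T"
    and PD: "prob_space PD" "sets PD = sets (MB W)"
    and f_meas: "(\<lambda>(x, u, d). f x u d) \<in> MB S \<Otimes>\<^sub>M MB A \<Otimes>\<^sub>M MB W \<rightarrow>\<^sub>M MB S"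
    and c_usc: "\<forall>t<T. usc_on (S \<times> A) (\<lambda>(x, u). c t x u) \<and> bounded_on (S \<times> A) (\<lambda>(x, u). c t x u)"
    and cT_usc: "usc_on S cT" "bounded_on S cT"
    and Q_tv: "\<forall>x\<in>S. \<forall>u\<in>A. \<forall>xs us. (\<forall>n. xs n \<in> S \<and> us n \<in> A) \<longrightarrow>
                 (\<lambda>n. (xs n, us n)) \<longlonglongrightarrow> (x, u) \<longrightarrow>
                 (\<lambda>n. tv_norm (Qk S PD f (xs n) (us n)) (Qk S PD f x u)) \<longlonglongrightarrow> 0"
    and \<alpha>: "0 < \<alpha>" "\<alpha> \<le> 1"
  shows "(\<forall>t\<le>T. usc_on S (J_alpha S A (Qk S PD f) \<alpha> T c cT t)
                  \<and> bounded_on S (J_alpha S A (Qk S PD f) \<alpha> T c cT t))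
    \<and> (\<forall>\<epsilon>>0. \<exists>g. (\<forall>t<T. g t \<in> MB S \<rightarrow>\<^sub>M MB A) \<and>
          (\<forall>x\<in>S. rho S A (Qk S PD f) \<alpha> T (markov_policy A g) x (total_cost T c cT)
                   \<le> J_alpha S A (Qk S PD f) \<alpha> T c cT 0 x + \<epsilon>))
    \<and> (\<forall>x\<in>S. (INF \<pi> \<in> policies S A T. rho S A (Qk S PD f) \<alpha> T \<pi> x (total_cost T c cT))
                   \<le> J_alpha S A (Qk S PD f) \<alpha> T c cT 0 x)"
proof -
  interpret P: prob_space PD by (rule PD(1))
  have fm: "(\<lambda>d. f x u d) \<in> PD \<rightarrow>\<^sub>M MB S" if x: "x \<in> S" and u: "u \<in> A" for x u
  proof -
    have xs: "x \<in> space (MB S)" using x by (simp add: space_restrict_space)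
    have us: "u \<in> space (MB A)" using u by (simp add: space_restrict_space)
    have "(\<lambda>y. case y of (u, d) \<Rightarrow> f x u d) \<in> MB A \<Otimes>\<^sub>M MB W \<rightarrow>\<^sub>M MB S"
      using measurable_Pair2[OF f_meas xs] by simp
    from measurable_Pair2[OF this us] have "(\<lambda>d. f x u d) \<in> MB W \<rightarrow>\<^sub>M MB S" by simp
    then show ?thesis by (simp add: measurable_cong_sets[OF PD(2) refl])
  qed
  have Qprob: "prob_space (Qk S PD f x u)" if "x \<in> S" "u \<in> A" for x u
    unfolding Qk_def by (rule P.prob_space_distr[OF fm[OF that]])
  have Qsets: "sets (Qk S PD f x u) = sets (MB S)" for x u
    unfolding Qk_def by simp
  have Qmeas: "(\<lambda>(x, u). Qk S PD f x u) \<in> MB S \<Otimes>\<^sub>M MB A \<rightarrow>\<^sub>M prob_algebra (MB S)"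
  proof -
    have "(\<lambda>p. distr PD (MB S) (\<lambda>d. f (fst p) (snd p) d)) \<in> MB S \<Otimes>\<^sub>M MB A \<rightarrow>\<^sub>M prob_algebra (MB S)"
    proof (rule measurable_distr_prob_space2[where g="\<lambda>_. PD" and M=PD and f="\<lambda>p d. f (fst p) (snd p) d" and N="MB S"])
      show "(\<lambda>_. PD) \<in> MB S \<Otimes>\<^sub>M MB A \<rightarrow>\<^sub>M prob_algebra PD"
        by (rule measurable_const) (simp add: space_prob_algebra P.prob_space_axioms)
      have r: "(\<lambda>q. (fst (fst q), snd (fst q), snd q)) \<in> (MB S \<Otimes>\<^sub>M MB A) \<Otimes>\<^sub>M MB W \<rightarrow>\<^sub>M MB S \<Otimes>\<^sub>M MB A \<Otimes>\<^sub>M MB W"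
        by measurable
      have "(\<lambda>q. f (fst (fst q)) (snd (fst q)) (snd q)) \<in> (MB S \<Otimes>\<^sub>M MB A) \<Otimes>\<^sub>M MB W \<rightarrow>\<^sub>M MB S"
        using measurable_compose[OF r f_meas] by simp
      then show "(\<lambda>(p, d). f (fst p) (snd p) d) \<in> (MB S \<Otimes>\<^sub>M MB A) \<Otimes>\<^sub>M PD \<rightarrow>\<^sub>M MB S"
        by (simp add: measurable_cong_sets[OF sets_pair_measure_cong[OF refl PD(2)] refl] case_prod_beta')
    qed
    then show ?thesis by (simp add: Qk_def case_prod_beta')
  qed
  interpret M: mdp S A "Qk S PD f" \<alpha> T c cT
  proof (rule mdp.intro)
  qed (use S(2) A(2) T Qprob Qsets Qmeas Q_tv \<alpha> c_usc cT_usc in auto)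
  show ?thesis by (rule M.main)
qed


end
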